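(* Consider a translation-invariant, nearest-neighbor, frustration free quantum spin chain as described in the context, and let $m,n\ge1$. The Hermitian operator $K(-m,n)=G(-m,0)\,G(0,n)\,G(-m,0)$ (acting on $\mathcal{H}_{[-m,n]}$) has range contained in $\mathcal{G}(-m,0)\otimes\mathcal{G}(1,n)$; its eigenspace for eigenvalue $1$ is exactly $\mathcal{G}(-m,n)$; and $\varepsilon(m,n)$ equals the largest eigenvalue of $K(-m,n)$ that is less than $1$.
   Context: For each $x\in\mathbb{Z}$, $\mathcal{H}_x=\mathbb{C}^d$, $\mathcal{H}_\Lambda=\bigotimes_{x\in\Lambda}\mathcal{H}_x$. A fixed positive operator $h$ on $\mathbb{C}^d\otimes\mathbb{C}^d$ gives $h(x,x+1)$ on sites $x,x+1$; $H(c,d)=\sum_{x=c}^{d-1}h(x,x+1)$ for $c\le d$ (extended by the identity to larger intervals, $H(c,c)=0$). Frustration free: $\mathcal{G}(c,d):=\operatorname{Ker}H(c,d)\ne\{0\}$ for every interval $[c,d]$; here $\mathcal{G}(c,d)$ for the interval $[c,d]$ is regarded as a subspace of $\mathcal{H}_{[c,d]}$ when written in tensor products, and $G(c,d)$ is the orthogonal projection onto $\operatorname{Ker}H(c,d)$ (with $G(c,c)=1$). $\varepsilon(m,n)=\sup\{\langle\psi,G(0,n)\psi\rangle:\psi\in\mathcal{G}(-m,0),\ \psi\perp\mathcal{G}(-m,n),\ \|\psi\|=1\}$, computed in $\mathcal{H}_{[-m,n]}$. *)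

theory Defs
  imports Complex_Main
begin

text \<open>A basis configuration of the interval [a,b]
 is a map sigma :: int => nat with sigma x < d on [a,b] and sigma x = 0 elsewhere.
 A vector of H_[a,b] = (C^d)^{tensor [a,b]} is a complex function on configurations
 vanishing off the configurations of [a,b]. The two-site interaction h on C^d (x) C^d
 is given by its matrix entries  h i j k l = < i j | h | k l >  (i,j,k,l < d).\<close>

type_synonym config = "int \<Rightarrow> nat"
type_synonym vec = "config \<Rightarrow> complex"

definition confs :: "nat \<Rightarrow> int \<Rightarrow> int \<Rightarrow> config set" where
  "confs d a b = {\<sigma>. (\<forall>x. a \<le> x \<and> x \<le> b \<longrightarrow> \<sigma> x < d) \<and> (\<forall>x. \<not> (a \<le> x \<and> x \<le> b) \<longrightarrow> \<sigma> x = 0)}"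

definition vecs :: "nat \<Rightarrow> int \<Rightarrow> int \<Rightarrow> vec set" where
  "vecs d a b = {\<psi>. \<forall>\<sigma>. \<sigma> \<notin> confs d a b \<longrightarrow> \<psi> \<sigma> = 0}"

definition zero_vec :: vec where "zero_vec = (\<lambda>_. 0)"

definition inner_prod :: "nat \<Rightarrow> int \<Rightarrow> int \<Rightarrow> vec \<Rightarrow> vec \<Rightarrow> complex" where
  "inner_prod d a b \<phi> \<psi> = (\<Sum>\<sigma>\<in>confs d a b. cnj (\<phi> \<sigma>) * \<psi> \<sigma>)"

definition positive_two_site :: "nat \<Rightarrow> (nat \<Rightarrow> nat \<Rightarrow> nat \<Rightarrow> nat \<Rightarrow> complex) \<Rightarrow> bool" where
  "positive_two_site d h \<longleftrightarrow>
     (\<forall>v :: nat \<Rightarrow> nat \<Rightarrow> complex.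
        let q = (\<Sum>i<d. \<Sum>j<d. \<Sum>k<d. \<Sum>l<d. cnj (v i j) * h i j k l * v k l)
        in Im q = 0 \<and> Re q \<ge> 0)"

text \<open>h(x,x+1) acting on H_[a,b] (for a <= x < b).\<close>
definition hloc :: "nat \<Rightarrow> int \<Rightarrow> int \<Rightarrow> (nat \<Rightarrow> nat \<Rightarrow> nat \<Rightarrow> nat \<Rightarrow> complex) \<Rightarrow> int \<Rightarrow> vec \<Rightarrow> vec" where
  "hloc d a b h x \<psi> = (\<lambda>\<sigma>. if \<sigma> \<in> confs d a b then
       (\<Sum>k<d. \<Sum>l<d. h (\<sigma> x) (\<sigma> (x+1)) k l * \<psi> (\<sigma>(x := k, x + 1 := l))) else 0)"

text \<open>H(c,e) = sum_{x=c}^{e-1} h(x,x+1), acting on H_[a,b] with [c,e] contained in [a,b]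
 (extended by the identity); H(c,c) = 0.\<close>
definition Hint :: "nat \<Rightarrow> int \<Rightarrow> int \<Rightarrow> (nat \<Rightarrow> nat \<Rightarrow> nat \<Rightarrow> nat \<Rightarrow> complex) \<Rightarrow> int \<Rightarrow> int \<Rightarrow> vec \<Rightarrow> vec" where
  "Hint d a b h c e \<psi> = (\<lambda>\<sigma>. \<Sum>x\<in>{c..<e}. hloc d a b h x \<psi> \<sigma>)"

definition kerH :: "nat \<Rightarrow> int \<Rightarrow> int \<Rightarrow> (nat \<Rightarrow> nat \<Rightarrow> nat \<Rightarrow> nat \<Rightarrow> complex) \<Rightarrow> int \<Rightarrow> int \<Rightarrow> vec set" where
  "kerH d a b h c e = {\<psi> \<in> vecs d a b. Hint d a b h c e \<psi> = zero_vec}"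

definition proj :: "nat \<Rightarrow> int \<Rightarrow> int \<Rightarrow> vec set \<Rightarrow> vec \<Rightarrow> vec" where
  "proj d a b S \<psi> = (THE \<phi>. \<phi> \<in> S \<and> (\<forall>\<chi>\<in>S. inner_prod d a b \<chi> (\<lambda>\<sigma>. \<psi> \<sigma> - \<phi> \<sigma>) = 0))"

definition Gproj :: "nat \<Rightarrow> int \<Rightarrow> int \<Rightarrow> (nat \<Rightarrow> nat \<Rightarrow> nat \<Rightarrow> nat \<Rightarrow> complex) \<Rightarrow> int \<Rightarrow> int \<Rightarrow> vec \<Rightarrow> vec" where
  "Gproj d a b h c e = proj d a b (kerH d a b h c e)"

definition frustration_free :: "nat \<Rightarrow> (nat \<Rightarrow> nat \<Rightarrow> nat \<Rightarrow> nat \<Rightarrow> complex) \<Rightarrow> bool" where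
  "frustration_free d h \<longleftrightarrow> (\<forall>c e. c \<le> e \<longrightarrow> kerH d c e h c e \<noteq> {zero_vec})"

text \<open>Tensor product of phi in H_[a,b] and chi in H_[b+1,c], as vector in H_[a,c].\<close>
definition restr :: "int \<Rightarrow> int \<Rightarrow> config \<Rightarrow> config" where
  "restr a b \<sigma> = (\<lambda>x. if a \<le> x \<and> x \<le> b then \<sigma> x else 0)"

definition tens :: "nat \<Rightarrow> int \<Rightarrow> int \<Rightarrow> int \<Rightarrow> vec \<Rightarrow> vec \<Rightarrow> vec" where
  "tens d a b c \<phi> \<chi> = (\<lambda>\<sigma>. if \<sigma> \<in> confs d a c then \<phi> (restr a b \<sigma>) * \<chi> (restr (b+1) c \<sigma>) else 0)"

definition tensor_sub :: "nat \<Rightarrow> int \<Rightarrow> int \<Rightarrow> int \<Rightarrow> vec set \<Rightarrow> vec set \<Rightarrow> vec set" where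
  "tensor_sub d a b c S T = {\<psi>. \<exists>(N::nat) (coef :: nat \<Rightarrow> complex) \<phi> \<chi>.
      (\<forall>i<N. \<phi> i \<in> S \<and> \<chi> i \<in> T) \<and>
      \<psi> = (\<lambda>\<sigma>. \<Sum>i<N. coef i * tens d a b c (\<phi> i) (\<chi> i) \<sigma>)}"

text \<open>epsilon(m,n), computed in H_[-m,n]; supremum of a set of nonnegative reals, with the
 convention that the supremum of the empty set is 0.\<close>
definition eps :: "nat \<Rightarrow> (nat \<Rightarrow> nat \<Rightarrow> nat \<Rightarrow> nat \<Rightarrow> complex) \<Rightarrow> nat \<Rightarrow> nat \<Rightarrow> real" where
  "eps d h m n = (let a = - int m; b = int n in
     Sup (insert 0 {Re (inner_prod d a b \<psi> (Gproj d a b h 0 b \<psi>)) | \<psi>.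
        \<psi> \<in> kerH d a b h a 0 \<and> (\<forall>\<chi>\<in>kerH d a b h a b. inner_prod d a b \<chi> \<psi> = 0) \<and>
        inner_prod d a b \<psi> \<psi> = 1}))"

definition Kop :: "nat \<Rightarrow> (nat \<Rightarrow> nat \<Rightarrow> nat \<Rightarrow> nat \<Rightarrow> complex) \<Rightarrow> nat \<Rightarrow> nat \<Rightarrow> vec \<Rightarrow> vec" where
  "Kop d h m n \<psi> = (let a = - int m; b = int n in
     Gproj d a b h a 0 (Gproj d a b h 0 b (Gproj d a b h a 0 \<psi>)))"

end

theory Submission
  imports Defs "HOL-Analysis.Analysis"
begin

definition vadd :: "(config \<Rightarrow> complex) \<Rightarrow> (config \<Rightarrow> complex) \<Rightarrow> (config \<Rightarrow> complex)" where "vadd x y = (\<lambda>\<sigma>. x \<sigma> + y \<sigma>)"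
definition vsub :: "(config \<Rightarrow> complex) \<Rightarrow> (config \<Rightarrow> complex) \<Rightarrow> (config \<Rightarrow> complex)" where "vsub x y = (\<lambda>\<sigma>. x \<sigma> - y \<sigma>)"
definition vsc :: "complex \<Rightarrow> (config \<Rightarrow> complex) \<Rightarrow> (config \<Rightarrow> complex)" where "vsc c x = (\<lambda>\<sigma>. c * x \<sigma>)"

lemma vadd_apply[simp]: "vadd x y \<sigma> = x \<sigma> + y \<sigma>" by (simp add: vadd_def)
lemma vsub_apply[simp]: "vsub x y \<sigma> = x \<sigma> - y \<sigma>" by (simp add: vsub_def)
lemma vsc_apply[simp]: "vsc c x \<sigma> = c * x \<sigma>" by (simp add: vsc_def)
lemma zero_vec_apply[simp]: "zero_vec \<sigma> = 0" by (simp add: Defs.zero_vec_def)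

definition ip :: "config set \<Rightarrow> (config \<Rightarrow> complex) \<Rightarrow> (config \<Rightarrow> complex) \<Rightarrow> complex" where
  "ip C x y = (\<Sum>\<sigma>\<in>C. cnj (x \<sigma>) * y \<sigma>)"

definition VS :: "config set \<Rightarrow> (config \<Rightarrow> complex) set" where
  "VS C = {\<psi>. \<forall>\<sigma>. \<sigma> \<notin> C \<longrightarrow> \<psi> \<sigma> = 0}"

definition subsp :: "config set \<Rightarrow> (config \<Rightarrow> complex) set \<Rightarrow> bool" where
  "subsp C S \<longleftrightarrow> S \<subseteq> VS C \<and> zero_vec \<in> S \<and> (\<forall>x\<in>S. \<forall>y\<in>S. vadd x y \<in> S)
      \<and> (\<forall>c. \<forall>x\<in>S. vsc c x \<in> S)"

definition prj :: "config set \<Rightarrow> (config \<Rightarrow> complex) set \<Rightarrow> (config \<Rightarrow> complex) \<Rightarrow> (config \<Rightarrow> complex)" where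
  "prj C S \<psi> = (THE \<phi>. \<phi> \<in> S \<and> (\<forall>\<xi>\<in>S. ip C \<xi> (vsub \<psi> \<phi>) = 0))"

lemma ip_add2: "ip C z (vadd x y) = ip C z x + ip C z y"
  by (simp add: ip_def sum.distrib algebra_simps)
lemma ip_sub2: "ip C z (vsub x y) = ip C z x - ip C z y"
  by (simp add: ip_def sum_subtractf algebra_simps)
lemma ip_sc2: "ip C z (vsc c x) = c * ip C z x"
  by (simp add: ip_def sum_distrib_left algebra_simps)
lemma ip_add1: "ip C (vadd x y) z = ip C x z + ip C y z"
  by (simp add: ip_def sum.distrib algebra_simps)
lemma ip_sub1: "ip C (vsub x y) z = ip C x z - ip C y z"
  by (simp add: ip_def sum_subtractf algebra_simps)
lemma ip_sc1: "ip C (vsc c x) z = cnj c * ip C x z"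
  by (simp add: ip_def sum_distrib_left algebra_simps)
lemma ip_zero1[simp]: "ip C zero_vec z = 0" by (simp add: ip_def)
lemma ip_zero2[simp]: "ip C z zero_vec = 0" by (simp add: ip_def)
lemma ip_cnj: "cnj (ip C x y) = ip C y x"
  by (simp add: ip_def mult.commute)
lemma ip_self: "ip C x x = complex_of_real (\<Sum>\<sigma>\<in>C. (cmod (x \<sigma>))^2)"
  unfolding ip_def of_real_sum by (intro sum.cong refl) (metis complex_norm_square mult.commute of_real_power)
lemma ip_self_Re: "Re (ip C x x) = (\<Sum>\<sigma>\<in>C. (cmod (x \<sigma>))^2)"
  by (simp add: ip_self)
lemma ip_self_Im: "Im (ip C x x) = 0"
  by (simp add: ip_self)
lemma ip_self_nonneg: "Re (ip C x x) \<ge> 0"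
  unfolding ip_self_Re by (simp add: sum_nonneg)
lemma ip_self_zero:
  assumes "finite C" "ip C x x = 0" "\<sigma> \<in> C" shows "x \<sigma> = 0"
proof -
  have "(\<Sum>\<sigma>\<in>C. (cmod (x \<sigma>))^2) = 0" using assms(2) ip_self_Re[of C x] by simp
  then have "\<forall>\<sigma>\<in>C. (cmod (x \<sigma>))^2 = 0" using assms(1) by (subst (asm) sum_nonneg_eq_0_iff) auto
  then show ?thesis using assms(3) by simp
qed

lemma ip_self_zero_eq:
  assumes "finite C" "ip C x x = 0" "x \<in> VS C" shows "x = zero_vec"
  using ip_self_zero[OF assms(1,2)] assms(3) by (auto simp: VS_def fun_eq_iff)

lemma subspD:
  assumes "subsp C S"
  shows "S \<subseteq> VS C" "zero_vec \<in> S" "x \<in> S \<Longrightarrow> y \<in> S \<Longrightarrow> vadd x y \<in> S"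
    "x \<in> S \<Longrightarrow> vsc c x \<in> S"
  using assms by (auto simp: subsp_def)

lemma subsp_sub:
  assumes "subsp C S" "x \<in> S" "y \<in> S" shows "vsub x y \<in> S"
proof -
  have "vsub x y = vadd x (vsc (-1) y)" by (simp add: fun_eq_iff)
  then show ?thesis using subspD[OF assms(1)] assms(2,3) by metis
qed

lemma subsp_sum:
  assumes "subsp C S" "finite I" "\<And>i. i \<in> I \<Longrightarrow> f i \<in> S"
  shows "(\<lambda>\<sigma>. \<Sum>i\<in>I. f i \<sigma>) \<in> S"
  using assms(2,3)
proof (induction I rule: finite_induct)
  case empty
  then show ?case using subspD(2)[OF assms(1)] by (simp add: Defs.zero_vec_def)
next
  case (insert i I)
  have "(\<lambda>\<sigma>. \<Sum>i\<in>insert i I. f i \<sigma>) = vadd (f i) (\<lambda>\<sigma>. \<Sum>i\<in>I. f i \<sigma>)"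
    using insert(1,2) by (simp add: fun_eq_iff)
  then show ?case using insert subspD(3)[OF assms(1)] by auto
qed

lemma prj_unique:
  assumes "finite C" "subsp C S" "\<phi>1 \<in> S" "\<forall>\<xi>\<in>S. ip C \<xi> (vsub \<psi> \<phi>1) = 0"
    "\<phi>2 \<in> S" "\<forall>\<xi>\<in>S. ip C \<xi> (vsub \<psi> \<phi>2) = 0"
  shows "\<phi>1 = \<phi>2"
proof -
  let ?d = "vsub \<phi>1 \<phi>2"
  have dS: "?d \<in> S" using subsp_sub assms by blast
  have "vsub (vsub \<psi> \<phi>2) (vsub \<psi> \<phi>1) = ?d" by (simp add: fun_eq_iff)
  then have "ip C ?d ?d = ip C ?d (vsub \<psi> \<phi>2) - ip C ?d (vsub \<psi> \<phi>1)"
    by (metis ip_sub2)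
  also have "\<dots> = 0" using assms(4,6) dS by simp
  finally have "?d = zero_vec"
    using ip_self_zero_eq[OF assms(1)] dS subspD(1)[OF assms(2)] by blast
  then show ?thesis by (simp add: fun_eq_iff)
qed

lemma prj_exists_aux:
  assumes fin: "finite C" and DC: "D \<subseteq> C"
  shows "(\<forall>S. subsp C S \<longrightarrow> S \<subseteq> VS D \<longrightarrow>
      (\<forall>\<psi>. \<exists>\<phi>\<in>S. \<forall>\<xi>\<in>S. ip C \<xi> (vsub \<psi> \<phi>) = 0))"
  using finite_subset[OF DC fin] DC
proof (induction D rule: finite_subset_induct)
  case empty
  show ?case
  proof (intro allI impI)
    fix S \<psi> assume "subsp C S" "S \<subseteq> VS {}"
    show "\<exists>\<phi>\<in>S. \<forall>\<xi>\<in>S. ip C \<xi> (vsub \<psi> \<phi>) = 0"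
    proof (intro bexI ballI)
      fix \<xi> assume "\<xi> \<in> S"
      then have "\<xi> = zero_vec" using \<open>S \<subseteq> VS {}\<close> by (auto simp: VS_def fun_eq_iff)
      then show "ip C \<xi> (vsub \<psi> zero_vec) = 0" by simp
    qed (use subspD(2)[OF \<open>subsp C S\<close>] in auto)
  qed
next
  case (insert \<tau> D)
  show ?case
  proof (intro allI impI)
    fix S \<psi> assume S: "subsp C S" and SD: "S \<subseteq> VS (insert \<tau> D)"
    define S' where "S' = {x\<in>S. x \<tau> = 0}"
    have S'sub: "subsp C S'" using S unfolding S'_def subsp_def by auto
    have S'D: "S' \<subseteq> VS D" using SD unfolding S'_def VS_def by auto
    from insert.IH S'sub S'D have "\<forall>\<psi>. \<exists>\<phi>\<in>S'. \<forall>\<xi>\<in>S'. ip C \<xi> (vsub \<psi> \<phi>) = 0" by blast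
    then obtain P where P: "\<And>\<psi>. P \<psi> \<in> S'" "\<And>\<psi> \<xi>. \<xi> \<in> S' \<Longrightarrow> ip C \<xi> (vsub \<psi> (P \<psi>)) = 0"
      by metis
    show "\<exists>\<phi>\<in>S. \<forall>\<xi>\<in>S. ip C \<xi> (vsub \<psi> \<phi>) = 0"
    proof (cases "\<forall>x\<in>S. x \<tau> = 0")
      case True
      then have "S' = S" unfolding S'_def by auto
      then show ?thesis using P by metis
    next
      case False
      then obtain s where s: "s \<in> S" "s \<tau> \<noteq> 0" by auto
      define s' where "s' = vsub s (P s)"
      have PS: "P x \<in> S" for x using P(1) unfolding S'_def by auto
      have s'S: "s' \<in> S" unfolding s'_def using subsp_sub[OF S s(1) PS] .
      have s't: "s' \<tau> = s \<tau>" using P(1)[of s] unfolding s'_def S'_def by auto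
      have s'perp: "ip C x s' = 0" if "x \<in> S'" for x using P(2)[OF that] unfolding s'_def .
      have s'perp2: "ip C s' x = 0" if "x \<in> S'" for x
        using s'perp[OF that] ip_cnj[of C x s'] by simp
      define nn where "nn = ip C s' s'"
      have nn: "nn \<noteq> 0"
        using ip_self_zero[OF fin, of s' \<tau>] s't s(2) insert.hyps(2) unfolding nn_def by auto
      define k where "k = ip C s' \<psi> / nn"
      define \<phi> where "\<phi> = vadd (P \<psi>) (vsc k s')"
      have \<phi>S: "\<phi> \<in> S" unfolding \<phi>_def using subspD(3,4)[OF S] PS s'S by blast
      have r: "vsub \<psi> \<phi> = vsub (vsub \<psi> (P \<psi>)) (vsc k s')" unfolding \<phi>_def
        by (simp add: fun_eq_iff)
      show ?thesis
      proof (intro bexI[OF _ \<phi>S] ballI)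
        fix \<xi> assume \<xi>: "\<xi> \<in> S"
        define c where "c = \<xi> \<tau> / s' \<tau>"
        define \<xi>' where "\<xi>' = vsub \<xi> (vsc c s')"
        have \<xi>'S': "\<xi>' \<in> S'" unfolding S'_def \<xi>'_def
          using subsp_sub[OF S \<xi> subspD(4)[OF S s'S]] s't s(2) by (simp add: c_def)
        have \<xi>eq: "\<xi> = vadd \<xi>' (vsc c s')" unfolding \<xi>'_def by (simp add: fun_eq_iff)
        have 1: "ip C \<xi>' (vsub \<psi> \<phi>) = 0"
          unfolding r ip_sub2 ip_sc2 using P(2)[OF \<xi>'S', of \<psi>] s'perp[OF \<xi>'S'] by (simp add: ip_sub2)
        have 2: "ip C s' (vsub \<psi> \<phi>) = 0"
          unfolding r ip_sub2 ip_sc2 using s'perp2[OF P(1)[of \<psi>]] nn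
          by (simp add: k_def nn_def)
        show "ip C \<xi> (vsub \<psi> \<phi>) = 0"
          by (subst \<xi>eq) (simp add: ip_add1 ip_sc1 1 2)
      qed
    qed
  qed
qed

lemma prj_exists:
  assumes "finite C" "subsp C S"
  shows "\<exists>\<phi>\<in>S. \<forall>\<xi>\<in>S. ip C \<xi> (vsub \<psi> \<phi>) = 0"
  using prj_exists_aux[OF assms(1) order_refl] assms(2) subspD(1)[OF assms(2)] by blast

lemma prj:
  assumes "finite C" "subsp C S"
  shows "prj C S \<psi> \<in> S" "\<And>\<xi>. \<xi> \<in> S \<Longrightarrow> ip C \<xi> (vsub \<psi> (prj C S \<psi>)) = 0"
proof -
  have ex1: "\<exists>!\<phi>. \<phi> \<in> S \<and> (\<forall>\<xi>\<in>S. ip C \<xi> (vsub \<psi> \<phi>) = 0)"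
    using prj_exists[OF assms] prj_unique[OF assms] by blast
  have "prj C S \<psi> \<in> S \<and> (\<forall>\<xi>\<in>S. ip C \<xi> (vsub \<psi> (prj C S \<psi>)) = 0)"
    unfolding prj_def by (rule theI'[OF ex1])
  then show "prj C S \<psi> \<in> S" "\<And>\<xi>. \<xi> \<in> S \<Longrightarrow> ip C \<xi> (vsub \<psi> (prj C S \<psi>)) = 0" by auto
qed

lemma prj_eqI:
  assumes "finite C" "subsp C S" "\<phi> \<in> S" "\<And>\<xi>. \<xi> \<in> S \<Longrightarrow> ip C \<xi> (vsub \<psi> \<phi>) = 0"
  shows "prj C S \<psi> = \<phi>"
  using prj_unique[OF assms(1,2), of "prj C S \<psi>" \<psi> \<phi>] prj[OF assms(1,2)] assms(3,4) by blast

lemma prj_id: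
  assumes "finite C" "subsp C S" "\<psi> \<in> S" shows "prj C S \<psi> = \<psi>"
  by (rule prj_eqI[OF assms]) (simp add: vsub_def Defs.zero_vec_def[symmetric])



definition ev :: "config \<Rightarrow> (config \<Rightarrow> complex)" where "ev \<sigma> = (\<lambda>\<tau>. if \<tau> = \<sigma> then 1 else 0)"

lemma ip_sum2: "ip C z (\<lambda>\<tau>. \<Sum>i\<in>I. f i \<tau>) = (\<Sum>i\<in>I. ip C z (f i))"
  unfolding ip_def by (simp add: sum_distrib_left sum.swap[of _ C])

lemma ip_sum1: "ip C (\<lambda>\<tau>. \<Sum>i\<in>I. f i \<tau>) z = (\<Sum>i\<in>I. ip C (f i) z)"
  unfolding ip_def by (simp add: sum_distrib_right sum.swap[of _ C])

lemma VS_expand: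
  assumes "finite C" "\<psi> \<in> VS C"
  shows "\<psi> = (\<lambda>\<tau>. \<Sum>\<sigma>\<in>C. \<psi> \<sigma> * ev \<sigma> \<tau>)"
proof
  fix \<tau>
  show "\<psi> \<tau> = (\<Sum>\<sigma>\<in>C. \<psi> \<sigma> * ev \<sigma> \<tau>)"
  proof (cases "\<tau> \<in> C")
    case True
    then have "(\<Sum>\<sigma>\<in>C. \<psi> \<sigma> * ev \<sigma> \<tau>) = (\<Sum>\<sigma>\<in>C. if \<sigma> = \<tau> then \<psi> \<tau> else 0)"
      by (intro sum.cong) (auto simp: ev_def)
    also have "\<dots> = \<psi> \<tau>" using True assms(1) by simp
    finally show ?thesis by simp
  next
    case False
    then show ?thesis using assms(2) by (auto simp: VS_def ev_def intro!: sum.neutral)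
  qed
qed

context
  fixes C S
  assumes fin: "finite C" and sub: "subsp C S"
begin

lemma prjS: "prj C S \<psi> \<in> S" using prj[OF fin sub] by blast
lemma prjO: "\<xi> \<in> S \<Longrightarrow> ip C \<xi> (vsub \<psi> (prj C S \<psi>)) = 0" using prj[OF fin sub] by blast
lemma prjO': "\<xi> \<in> S \<Longrightarrow> ip C (vsub \<psi> (prj C S \<psi>)) \<xi> = 0"
  using prjO[of \<xi> \<psi>] ip_cnj[of C \<xi> "vsub \<psi> (prj C S \<psi>)"] by (metis complex_cnj_zero)
lemma prjV: "prj C S \<psi> \<in> VS C" using prjS subspD(1)[OF sub] by blast
lemma prj_idS: "\<psi> \<in> S \<Longrightarrow> prj C S \<psi> = \<psi>" using prj_id[OF fin sub] .

lemma prj_herm: "ip C \<phi> (prj C S \<psi>) = ip C (prj C S \<phi>) \<psi>"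
proof -
  have e1: "\<phi> = vadd (prj C S \<phi>) (vsub \<phi> (prj C S \<phi>))" by (simp add: fun_eq_iff)
  have e2: "\<psi> = vadd (prj C S \<psi>) (vsub \<psi> (prj C S \<psi>))" by (simp add: fun_eq_iff)
  have "ip C \<phi> (prj C S \<psi>) = ip C (prj C S \<phi>) (prj C S \<psi>)"
    by (subst e1) (simp add: ip_add1 prjO' prjS)
  also have "\<dots> = ip C (prj C S \<phi>) \<psi>"
    by (subst (2) e2) (simp add: ip_add2 prjO prjS)
  finally show ?thesis .
qed

lemma prj_pyth: "ip C \<psi> \<psi> = ip C (prj C S \<psi>) (prj C S \<psi>) + ip C (vsub \<psi> (prj C S \<psi>)) (vsub \<psi> (prj C S \<psi>))"
proof -
  have e2: "\<psi> = vadd (prj C S \<psi>) (vsub \<psi> (prj C S \<psi>))" by (simp add: fun_eq_iff)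
  show ?thesis
    by (subst (1 2) e2) (simp add: ip_add1 ip_add2 prjO prjO' prjS)
qed

lemma prj_norm_le: "Re (ip C (prj C S \<psi>) (prj C S \<psi>)) \<le> Re (ip C \<psi> \<psi>)"
  using prj_pyth[of \<psi>] ip_self_nonneg[of C "vsub \<psi> (prj C S \<psi>)"] by simp

lemma prj_norm_eq:
  assumes "\<psi> \<in> VS C" "Re (ip C (prj C S \<psi>) (prj C S \<psi>)) = Re (ip C \<psi> \<psi>)"
  shows "prj C S \<psi> = \<psi>"
proof -
  have "Re (ip C (vsub \<psi> (prj C S \<psi>)) (vsub \<psi> (prj C S \<psi>))) = 0"
    using prj_pyth[of \<psi>] assms(2) by simp
  then have "ip C (vsub \<psi> (prj C S \<psi>)) (vsub \<psi> (prj C S \<psi>)) = 0"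
    using ip_self_Im by (simp add: complex_eq_iff)
  moreover have "vsub \<psi> (prj C S \<psi>) \<in> VS C" using assms(1) prjV by (auto simp: VS_def)
  ultimately have "vsub \<psi> (prj C S \<psi>) = zero_vec" using ip_self_zero_eq[OF fin] by blast
  then show ?thesis by (simp add: fun_eq_iff)
qed

lemma prj_sc: "prj C S (vsc c \<psi>) = vsc c (prj C S \<psi>)"
proof (rule prj_eqI[OF fin sub])
  show "vsc c (prj C S \<psi>) \<in> S" using subspD(4)[OF sub prjS] .
  fix \<xi> assume "\<xi> \<in> S"
  have "vsub (vsc c \<psi>) (vsc c (prj C S \<psi>)) = vsc c (vsub \<psi> (prj C S \<psi>))"
    by (simp add: fun_eq_iff algebra_simps)
  then show "ip C \<xi> (vsub (vsc c \<psi>) (vsc c (prj C S \<psi>))) = 0"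
    using prjO[OF \<open>\<xi> \<in> S\<close>] by (simp add: ip_sc2)
qed

lemma prj_expand:
  assumes "\<psi> \<in> VS C"
  shows "prj C S \<psi> = (\<lambda>\<tau>. \<Sum>\<sigma>\<in>C. \<psi> \<sigma> * prj C S (ev \<sigma>) \<tau>)"
proof (rule prj_eqI[OF fin sub])
  show "(\<lambda>\<tau>. \<Sum>\<sigma>\<in>C. \<psi> \<sigma> * prj C S (ev \<sigma>) \<tau>) \<in> S"
    using subsp_sum[OF sub fin, of "\<lambda>\<sigma>. vsc (\<psi> \<sigma>) (prj C S (ev \<sigma>))"] subspD(4)[OF sub prjS]
    by simp
  fix \<xi> assume \<xi>: "\<xi> \<in> S"
  have eq: "vsub \<psi> (\<lambda>\<tau>. \<Sum>\<sigma>\<in>C. \<psi> \<sigma> * prj C S (ev \<sigma>) \<tau>)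
      = (\<lambda>\<tau>. \<Sum>\<sigma>\<in>C. vsc (\<psi> \<sigma>) (vsub (ev \<sigma>) (prj C S (ev \<sigma>))) \<tau>)"
    by (subst (1) VS_expand[OF fin assms]) (simp add: fun_eq_iff algebra_simps sum_subtractf)
  have "ip C \<xi> (\<lambda>\<tau>. \<Sum>\<sigma>\<in>C. vsc (\<psi> \<sigma>) (vsub (ev \<sigma>) (prj C S (ev \<sigma>))) \<tau>) = 0"
    unfolding ip_sum2 ip_sc2 by (simp add: prjO[OF \<xi>])
  then show "ip C \<xi> (vsub \<psi> (\<lambda>\<tau>. \<Sum>\<sigma>\<in>C. \<psi> \<sigma> * prj C S (ev \<sigma>) \<tau>)) = 0"
    unfolding eq .
qed

end



lemma quad_zero:
  fixes p Q :: real
  assumes "Q \<ge> 0" "\<And>t. 0 \<le> 2 * t * p + t^2 * Q"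
  shows "p = 0"
proof (rule ccontr)
  assume "p \<noteq> 0"
  define t where "t = - p / (Q + 1)"
  have ts: "t * (Q + 1) = - p" unfolding t_def using assms(1) by simp
  have "(Q+1)^2 * (2*t*p + t^2*Q) = 2*(t*(Q+1))*(Q+1)*p + (t*(Q+1))^2*Q"
    by (simp add: algebra_simps power2_eq_square)
  also have "\<dots> = - (p^2 * (Q + 2))" unfolding ts by (simp add: algebra_simps power2_eq_square)
  finally have eq: "(Q+1)^2 * (2*t*p + t^2*Q) = - (p^2 * (Q + 2))" .
  have "p^2 * (Q + 2) > 0" using \<open>p \<noteq> 0\<close> assms(1) by simp
  then have "(Q+1)^2 * (2*t*p + t^2*Q) < 0" using eq by linarith
  moreover have "(Q+1)^2 > 0" using assms(1) by simp
  ultimately have "2*t*p + t^2*Q < 0" by (simp add: mult_less_0_iff)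
  then show False using assms(2)[of t] by simp
qed

definition Bf :: "nat \<Rightarrow> (nat \<Rightarrow> nat \<Rightarrow> nat \<Rightarrow> nat \<Rightarrow> complex) \<Rightarrow> (nat \<Rightarrow> nat \<Rightarrow> complex) \<Rightarrow> (nat \<Rightarrow> nat \<Rightarrow> complex) \<Rightarrow> complex" where
  "Bf d h u v = (\<Sum>i<d. \<Sum>j<d. \<Sum>k<d. \<Sum>l<d. cnj (u i j) * h i j k l * v k l)"

lemma Bf_add1: "Bf d h (\<lambda>i j. u i j + v i j) w = Bf d h u w + Bf d h v w"
  unfolding Bf_def by (simp add: distrib_right sum.distrib)
lemma Bf_add2: "Bf d h w (\<lambda>i j. u i j + v i j) = Bf d h w u + Bf d h w v"
  unfolding Bf_def by (simp add: distrib_left sum.distrib)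
lemma Bf_sc1: "Bf d h (\<lambda>i j. c * u i j) w = cnj c * Bf d h u w"
  unfolding Bf_def by (simp add: sum_distrib_left mult.assoc)
lemma Bf_sc2: "Bf d h w (\<lambda>i j. c * u i j) = c * Bf d h w u"
  unfolding Bf_def by (simp add: sum_distrib_left mult.assoc mult.left_commute)

lemma Bf_lin:
  "Bf d h (\<lambda>i j. a * u i j + b * v i j) (\<lambda>i j. c * u i j + e * v i j) =
     cnj a * c * Bf d h u u + cnj a * e * Bf d h u v + cnj b * c * Bf d h v u + cnj b * e * Bf d h v v"
  using Bf_add1[of d h "\<lambda>i j. a * u i j" "\<lambda>i j. b * v i j"]
    Bf_add2[of d h _ "\<lambda>i j. c * u i j" "\<lambda>i j. e * v i j"]
    Bf_sc1[of d h a u] Bf_sc1[of d h b v] Bf_sc2[of d h _ c u] Bf_sc2[of d h _ e v]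
  by (simp add: algebra_simps)

lemma pos_Bf:
  assumes "positive_two_site d h"
  shows "Im (Bf d h u u) = 0" "Re (Bf d h u u) \<ge> 0"
  using assms unfolding Defs.positive_two_site_def Bf_def Let_def by auto

lemma Bf_herm:
  assumes pos: "positive_two_site d h"
  shows "Bf d h u v = cnj (Bf d h v u)"
proof -
  have 1: "Im (Bf d h (\<lambda>i j. 1 * u i j + 1 * v i j) (\<lambda>i j. 1 * u i j + 1 * v i j)) = 0"
    by (rule pos_Bf[OF pos])
  have 2: "Im (Bf d h (\<lambda>i j. 1 * u i j + \<i> * v i j) (\<lambda>i j. 1 * u i j + \<i> * v i j)) = 0"
    by (rule pos_Bf[OF pos])
  from 1 have "Im (Bf d h u v) + Im (Bf d h v u) = 0"
    unfolding Bf_lin using pos_Bf(1)[OF pos, of u] pos_Bf(1)[OF pos, of v] by simp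
  moreover from 2 have "Re (Bf d h u v) - Re (Bf d h v u) = 0"
    unfolding Bf_lin using pos_Bf(1)[OF pos, of u] pos_Bf(1)[OF pos, of v] by simp
  ultimately show ?thesis by (simp add: complex_eq_iff)
qed

lemma Bf_zero:
  assumes pos: "positive_two_site d h" and z: "Bf d h u u = 0"
  shows "Bf d h w u = 0"
proof -
  have gen: "Re (Bf d h u w') = 0" for w'
  proof -
    let ?p = "Bf d h u w'"
    have "Bf d h w' u = cnj ?p" by (rule Bf_herm[OF pos])
    have "0 \<le> 2 * t * Re ?p + t^2 * Re (Bf d h w' w')" for t :: real
    proof -
      have "0 \<le> Re (Bf d h (\<lambda>i j. 1 * u i j + complex_of_real t * w' i j) (\<lambda>i j. 1 * u i j + complex_of_real t * w' i j))"
        by (rule pos_Bf[OF pos])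
      also have "\<dots> = 2 * t * Re ?p + t^2 * Re (Bf d h w' w')"
        unfolding Bf_lin z using \<open>Bf d h w' u = cnj ?p\<close> by (simp add: power2_eq_square)
      finally show ?thesis .
    qed
    then show ?thesis using quad_zero[OF pos_Bf(2)[OF pos, of w']] by blast
  qed
  have "Re (Bf d h u w) = 0" by (rule gen)
  moreover have "Re (Bf d h u (\<lambda>i j. \<i> * w i j)) = 0" by (rule gen)
  then have "Im (Bf d h u w) = 0"
    unfolding Bf_sc2 by simp
  ultimately have "Bf d h u w = 0" by (simp add: complex_eq_iff)
  then show ?thesis by (subst Bf_herm[OF pos]) simp
qed


lemma Bf_delta:
  assumes "i < d" "j < d"
  shows "Bf d h (\<lambda>i' j'. if i' = i \<and> j' = j then 1 else 0) u = (\<Sum>k<d. \<Sum>l<d. h i j k l * u k l)"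
proof -
  have "Bf d h (\<lambda>i' j'. if i' = i \<and> j' = j then 1 else 0) u
      = (\<Sum>i'<d. \<Sum>j'<d. if i' = i \<and> j' = j then (\<Sum>k<d. \<Sum>l<d. h i' j' k l * u k l) else 0)"
    unfolding Bf_def by (intro sum.cong refl) (auto simp: sum_distrib_left)
  also have "\<dots> = (\<Sum>i'<d. if i' = i then (\<Sum>k<d. \<Sum>l<d. h i j k l * u k l) else 0)"
    using assms by (intro sum.cong refl) auto
  also have "\<dots> = (\<Sum>k<d. \<Sum>l<d. h i j k l * u k l)"
    using assms by simp
  finally show ?thesis .
qed

lemma confs_finite[simp]: "finite (confs d a b)"
proof -
  have "confs d a b = {f. \<forall>x. (x \<in> {a..b} \<longrightarrow> f x \<in> {..<d}) \<and> (x \<notin> {a..b} \<longrightarrow> f x = 0)}"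
    by (auto simp: Defs.confs_def)
  then show ?thesis using finite_set_of_finite_funs[of "{a..b}" "{..<d}" 0] by simp
qed

lemma vecs_VS: "vecs d a b = VS (confs d a b)" by (simp add: Defs.vecs_def VS_def)
lemma inner_ip: "inner_prod d a b = ip (confs d a b)" by (simp add: Defs.inner_prod_def ip_def fun_eq_iff)
lemma proj_prj: "proj d a b = prj (confs d a b)"
  by (simp add: Defs.proj_def prj_def Defs.inner_prod_def ip_def vsub_def fun_eq_iff)
lemma Gproj_prj: "Gproj d a b h c e = prj (confs d a b) (kerH d a b h c e)"
  by (simp add: Defs.Gproj_def proj_prj)

lemma upd_confs:
  assumes "a \<le> x" "x + 1 \<le> b" "\<sigma> \<in> confs d a b" "k < d" "l < d"
  shows "\<sigma>(x := k, x + 1 := l) \<in> confs d a b"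
  using assms by (auto simp: Defs.confs_def)

lemma upd2: "(x::int) \<noteq> y \<Longrightarrow> (\<tau>(x := i, y := j))(x := k, y := l) = \<tau>(x := k, y := l)"
  by (auto simp: fun_eq_iff)

lemma hloc_out: "\<sigma> \<notin> confs d a b \<Longrightarrow> hloc d a b h x \<psi> \<sigma> = 0"
  by (simp add: Defs.hloc_def)
lemma hloc_in: "\<sigma> \<in> confs d a b \<Longrightarrow> hloc d a b h x \<psi> \<sigma> =
   (\<Sum>k<d. \<Sum>l<d. h (\<sigma> x) (\<sigma> (x+1)) k l * \<psi> (\<sigma>(x := k, x + 1 := l)))"
  by (simp add: Defs.hloc_def)
lemma hloc_VS: "hloc d a b h x \<psi> \<in> VS (confs d a b)"
  by (simp add: VS_def hloc_out)
lemma hloc_add: "hloc d a b h x (vadd u v) = vadd (hloc d a b h x u) (hloc d a b h x v)"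
  by (simp add: Defs.hloc_def fun_eq_iff distrib_left sum.distrib)
lemma hloc_sc: "hloc d a b h x (vsc c u) = vsc c (hloc d a b h x u)"
  by (simp add: Defs.hloc_def fun_eq_iff sum_distrib_left mult.left_commute)
lemma hloc_sub: "hloc d a b h x (vsub u v) = vsub (hloc d a b h x u) (hloc d a b h x v)"
  by (simp add: Defs.hloc_def fun_eq_iff right_diff_distrib sum_subtractf)
lemma hloc_zero: "hloc d a b h x zero_vec = zero_vec"
  by (simp add: Defs.hloc_def fun_eq_iff)
lemma hloc_sum: "hloc d a b h x (\<lambda>\<sigma>. \<Sum>i\<in>I. f i \<sigma>) = (\<lambda>\<sigma>. \<Sum>i\<in>I. hloc d a b h x (f i) \<sigma>)"
  by (simp add: Defs.hloc_def fun_eq_iff sum_distrib_left sum.swap[of _ I])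

lemma Hint_add: "Hint d a b h c e (vadd u v) = vadd (Hint d a b h c e u) (Hint d a b h c e v)"
  by (simp add: Defs.Hint_def hloc_add fun_eq_iff sum.distrib)
lemma Hint_sc: "Hint d a b h c e (vsc k u) = vsc k (Hint d a b h c e u)"
  by (simp add: Defs.Hint_def hloc_sc fun_eq_iff sum_distrib_left)
lemma Hint_zero: "Hint d a b h c e zero_vec = zero_vec"
  by (simp add: Defs.Hint_def hloc_zero fun_eq_iff)

lemma kerH_subsp: "subsp (confs d a b) (kerH d a b h c e)"
  unfolding subsp_def Defs.kerH_def
  by (auto simp: vecs_VS Hint_add Hint_sc Hint_zero VS_def)

lemma sum_confs_split:
  assumes "a \<le> x" "x + 1 \<le> b"
  shows "(\<Sum>\<sigma>\<in>confs d a b. f \<sigma>) =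
    (\<Sum>\<tau>\<in>{\<tau>\<in>confs d a b. \<tau> x = 0 \<and> \<tau> (x+1) = 0}. \<Sum>i<d. \<Sum>j<d. f (\<tau>(x := i, x + 1 := j)))"
proof -
  let ?C0 = "{\<tau>\<in>confs d a b. \<tau> x = 0 \<and> \<tau> (x+1) = 0}"
  have "(\<Sum>\<tau>\<in>?C0. \<Sum>i<d. \<Sum>j<d. f (\<tau>(x := i, x + 1 := j)))
      = (\<Sum>\<tau>\<in>?C0. \<Sum>p\<in>{..<d} \<times> {..<d}. f (\<tau>(x := fst p, x + 1 := snd p)))"
    by (simp add: sum.cartesian_product split_def)
  also have "\<dots> = (\<Sum>q\<in>?C0 \<times> ({..<d} \<times> {..<d}). f ((fst q)(x := fst (snd q), x + 1 := snd (snd q))))"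
    by (simp add: sum.cartesian_product split_def)
  also have "\<dots> = (\<Sum>\<sigma>\<in>confs d a b. f \<sigma>)"
    apply (rule sum.reindex_bij_witness[where i = "\<lambda>\<sigma>. (\<sigma>(x := 0, x + 1 := 0), \<sigma> x, \<sigma> (x+1))"
        and j = "\<lambda>q. (fst q)(x := fst (snd q), x + 1 := snd (snd q))"])
    subgoal for q by (cases q) (auto simp: fun_eq_iff)
    subgoal for q using upd_confs[OF assms] by (cases q) auto
    subgoal for \<sigma> by (auto simp: fun_eq_iff)
    subgoal for \<sigma> using upd_confs[OF assms, of \<sigma> 0 0] assms by (auto simp: Defs.confs_def)
    subgoal for q by simp
    done
  finally show ?thesis by simp
qed

definition sl :: "(config \<Rightarrow> complex) \<Rightarrow> int \<Rightarrow> config \<Rightarrow> nat \<Rightarrow> nat \<Rightarrow> complex" where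
  "sl \<phi> x \<tau> = (\<lambda>i j. \<phi> (\<tau>(x := i, x + 1 := j)))"

lemma ip_hloc:
  assumes "a \<le> x" "x + 1 \<le> b"
  shows "ip (confs d a b) \<phi> (hloc d a b h x \<psi>) =
    (\<Sum>\<tau>\<in>{\<tau>\<in>confs d a b. \<tau> x = 0 \<and> \<tau> (x+1) = 0}. Bf d h (sl \<phi> x \<tau>) (sl \<psi> x \<tau>))"
proof -
  have "ip (confs d a b) \<phi> (hloc d a b h x \<psi>) = (\<Sum>\<sigma>\<in>confs d a b. cnj (\<phi> \<sigma>) *
      (\<Sum>k<d. \<Sum>l<d. h (\<sigma> x) (\<sigma> (x+1)) k l * \<psi> (\<sigma>(x := k, x + 1 := l))))"
    unfolding ip_def by (intro sum.cong refl) (simp add: hloc_in)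
  also have "\<dots> = (\<Sum>\<tau>\<in>{\<tau>\<in>confs d a b. \<tau> x = 0 \<and> \<tau> (x+1) = 0}. Bf d h (sl \<phi> x \<tau>) (sl \<psi> x \<tau>))"
    unfolding sum_confs_split[OF assms] Bf_def sl_def
    by (simp add: upd2 sum_distrib_left mult.assoc)
  finally show ?thesis .
qed

context
  fixes d :: nat and h and a b x :: int
  assumes pos: "positive_two_site d h" and ax: "a \<le> x" and xb: "x + 1 \<le> b"
begin

lemma hloc_pos: "Im (ip (confs d a b) \<psi> (hloc d a b h x \<psi>)) = 0"
   "Re (ip (confs d a b) \<psi> (hloc d a b h x \<psi>)) \<ge> 0"
  unfolding ip_hloc[OF ax xb] using pos_Bf[OF pos]
  by (auto simp: sum_nonneg)

lemma hloc_herm: "ip (confs d a b) \<phi> (hloc d a b h x \<psi>) = ip (confs d a b) (hloc d a b h x \<phi>) \<psi>"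
proof -
  have "ip (confs d a b) (hloc d a b h x \<phi>) \<psi> = cnj (ip (confs d a b) \<psi> (hloc d a b h x \<phi>))"
    by (simp add: ip_cnj)
  also have "\<dots> = ip (confs d a b) \<phi> (hloc d a b h x \<psi>)"
    unfolding ip_hloc[OF ax xb] cnj_sum
    by (intro sum.cong refl) (metis Bf_herm[OF pos])
  finally show ?thesis by simp
qed

lemma hloc_kernel:
  assumes "ip (confs d a b) \<psi> (hloc d a b h x \<psi>) = 0"
  shows "hloc d a b h x \<psi> = zero_vec"
proof -
  let ?C0 = "{\<tau>\<in>confs d a b. \<tau> x = 0 \<and> \<tau> (x+1) = 0}"
  have fin0: "finite ?C0" by simp
  have sum0: "(\<Sum>\<tau>\<in>?C0. Re (Bf d h (sl \<psi> x \<tau>) (sl \<psi> x \<tau>))) = 0"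
    using arg_cong[OF assms[unfolded ip_hloc[OF ax xb]], of Re] by (simp add: Re_sum)
  have each: "Bf d h (sl \<psi> x \<tau>) (sl \<psi> x \<tau>) = 0" if "\<tau> \<in> ?C0" for \<tau>
  proof -
    have "Re (Bf d h (sl \<psi> x \<tau>) (sl \<psi> x \<tau>)) = 0"
      using sum0 sum_nonneg_eq_0_iff[OF fin0, of "\<lambda>\<tau>. Re (Bf d h (sl \<psi> x \<tau>) (sl \<psi> x \<tau>))"]
        pos_Bf(2)[OF pos] that by auto
    then show ?thesis using pos_Bf(1)[OF pos] by (simp add: complex_eq_iff)
  qed
  show ?thesis
  proof
    fix \<sigma>
    show "hloc d a b h x \<psi> \<sigma> = zero_vec \<sigma>"
    proof (cases "\<sigma> \<in> confs d a b")
      case False then show ?thesis by (simp add: hloc_out)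
    next
      case True
      let ?\<tau> = "\<sigma>(x := 0, x + 1 := 0)"
      have lt: "\<sigma> x < d" "\<sigma> (x+1) < d" using True ax xb by (auto simp: Defs.confs_def)
      then have \<tau>: "?\<tau> \<in> ?C0" using upd_confs[OF ax xb True, of 0 0] by auto
      have "hloc d a b h x \<psi> \<sigma> = (\<Sum>k<d. \<Sum>l<d. h (\<sigma> x) (\<sigma> (x+1)) k l * sl \<psi> x ?\<tau> k l)"
        unfolding hloc_in[OF True] sl_def by (simp add: upd2)
      also have "\<dots> = Bf d h (\<lambda>i' j'. if i' = \<sigma> x \<and> j' = \<sigma> (x+1) then 1 else 0) (sl \<psi> x ?\<tau>)"
        using Bf_delta[OF lt] by simp
      also have "\<dots> = 0" using Bf_zero[OF pos each[OF \<tau>]] by simp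
      finally show ?thesis by simp
    qed
  qed
qed

end



lemma Hint_sub: "Hint d a b h c e (vsub u v) = vsub (Hint d a b h c e u) (Hint d a b h c e v)"
  by (simp add: Defs.Hint_def hloc_sub fun_eq_iff sum_subtractf)
lemma Hint_VS: "Hint d a b h c e \<psi> \<in> VS (confs d a b)"
  by (simp add: Defs.Hint_def VS_def hloc_out)
lemma Hint_eq: "Hint d a b h c e \<psi> = (\<lambda>\<sigma>. \<Sum>x\<in>{c..<e}. hloc d a b h x \<psi> \<sigma>)"
  by (simp add: Defs.Hint_def)

context
  fixes d :: nat and h and a b :: int
  assumes pos: "positive_two_site d h"
begin

lemma kerH_iff:
  assumes "a \<le> c" "e \<le> b"
  shows "\<psi> \<in> kerH d a b h c e \<longleftrightarrow> \<psi> \<in> vecs d a b \<and> (\<forall>x. c \<le> x \<and> x < e \<longrightarrow> hloc d a b h x \<psi> = zero_vec)"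
proof
  assume "\<psi> \<in> vecs d a b \<and> (\<forall>x. c \<le> x \<and> x < e \<longrightarrow> hloc d a b h x \<psi> = zero_vec)"
  then show "\<psi> \<in> kerH d a b h c e"
    by (simp add: Defs.kerH_def Hint_eq fun_eq_iff Defs.zero_vec_def)
next
  assume k: "\<psi> \<in> kerH d a b h c e"
  then have V: "\<psi> \<in> vecs d a b" and H0: "Hint d a b h c e \<psi> = zero_vec" by (auto simp: Defs.kerH_def)
  have "(\<Sum>x\<in>{c..<e}. ip (confs d a b) \<psi> (hloc d a b h x \<psi>)) = 0"
    using H0 unfolding Hint_eq ip_sum2[symmetric] by simp
  then have sRe: "(\<Sum>x\<in>{c..<e}. Re (ip (confs d a b) \<psi> (hloc d a b h x \<psi>))) = 0"
    by (metis Re_sum zero_complex.simps(1))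
  have "hloc d a b h x \<psi> = zero_vec" if "c \<le> x" "x < e" for x
  proof -
    have ax: "a \<le> x" "x + 1 \<le> b" using that assms by auto
    have "Re (ip (confs d a b) \<psi> (hloc d a b h x \<psi>)) = 0"
      using sRe sum_nonneg_eq_0_iff[of "{c..<e}" "\<lambda>x. Re (ip (confs d a b) \<psi> (hloc d a b h x \<psi>))"]
        hloc_pos(2)[OF pos] assms that by force
    then have "ip (confs d a b) \<psi> (hloc d a b h x \<psi>) = 0"
      using hloc_pos(1)[OF pos ax] by (simp add: complex_eq_iff)
    then show ?thesis using hloc_kernel[OF pos ax] by blast
  qed
  then show "\<psi> \<in> vecs d a b \<and> (\<forall>x. c \<le> x \<and> x < e \<longrightarrow> hloc d a b h x \<psi> = zero_vec)"
    using V by blast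
qed

lemma Hint_herm:
  assumes "a \<le> c" "e \<le> b"
  shows "ip (confs d a b) \<phi> (Hint d a b h c e \<psi>) = ip (confs d a b) (Hint d a b h c e \<phi>) \<psi>"
  unfolding Hint_eq ip_sum2 ip_sum1
  by (intro sum.cong refl) (rule hloc_herm[OF pos], use assms in auto)

end

lemma sum4_swap:
  "(\<Sum>k\<in>A. \<Sum>l\<in>B. \<Sum>k'\<in>C. \<Sum>l'\<in>D. f k l k' l') = (\<Sum>k'\<in>C. \<Sum>l'\<in>D. \<Sum>k\<in>A. \<Sum>l\<in>B. f k l k' l')"
proof -
  have "(\<Sum>k\<in>A. \<Sum>l\<in>B. \<Sum>k'\<in>C. \<Sum>l'\<in>D. f k l k' l') = (\<Sum>k\<in>A. \<Sum>k'\<in>C. \<Sum>l\<in>B. \<Sum>l'\<in>D. f k l k' l')"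
    by (intro sum.cong refl) (rule sum.swap)
  also have "\<dots> = (\<Sum>k'\<in>C. \<Sum>k\<in>A. \<Sum>l\<in>B. \<Sum>l'\<in>D. f k l k' l')" by (rule sum.swap)
  also have "\<dots> = (\<Sum>k'\<in>C. \<Sum>k\<in>A. \<Sum>l'\<in>D. \<Sum>l\<in>B. f k l k' l')"
    by (intro sum.cong refl) (rule sum.swap)
  also have "\<dots> = (\<Sum>k'\<in>C. \<Sum>l'\<in>D. \<Sum>k\<in>A. \<Sum>l\<in>B. f k l k' l')"
    by (intro sum.cong refl) (rule sum.swap)
  finally show ?thesis .
qed

lemma hloc_comm:
  assumes "a \<le> x" "x + 1 \<le> b" "a \<le> y" "y + 1 \<le> b" "y + 1 < x"
  shows "hloc d a b h x (hloc d a b h y \<psi>) = hloc d a b h y (hloc d a b h x \<psi>)"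
proof
  fix \<sigma>
  show "hloc d a b h x (hloc d a b h y \<psi>) \<sigma> = hloc d a b h y (hloc d a b h x \<psi>) \<sigma>"
  proof (cases "\<sigma> \<in> confs d a b")
    case False then show ?thesis by (simp add: hloc_out)
  next
    case True
    have sw: "\<sigma>(x := k, x + 1 := l, y := k', y + 1 := l') = \<sigma>(y := k', y + 1 := l', x := k, x + 1 := l)"
      for k l k' l' using assms(5) by (auto simp: fun_eq_iff)
    have "hloc d a b h x (hloc d a b h y \<psi>) \<sigma> =
      (\<Sum>k<d. \<Sum>l<d. \<Sum>k'<d. \<Sum>l'<d. h (\<sigma> x) (\<sigma> (x+1)) k l * (h (\<sigma> y) (\<sigma> (y+1)) k' l' *
          \<psi> (\<sigma>(x := k, x + 1 := l, y := k', y + 1 := l'))))"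
      unfolding hloc_in[OF True]
      by (intro sum.cong refl)
         (simp add: hloc_in[OF upd_confs[OF assms(1,2) True]] sum_distrib_left, use assms(5) in auto)
    also have "\<dots> = (\<Sum>k'<d. \<Sum>l'<d. \<Sum>k<d. \<Sum>l<d. h (\<sigma> y) (\<sigma> (y+1)) k' l' * (h (\<sigma> x) (\<sigma> (x+1)) k l *
          \<psi> (\<sigma>(y := k', y + 1 := l', x := k, x + 1 := l))))"
      unfolding sw sum4_swap[where f = "\<lambda>k l k' l'. h (\<sigma> x) (\<sigma> (x+1)) k l * (h (\<sigma> y) (\<sigma> (y+1)) k' l' *
          \<psi> (\<sigma>(y := k', y + 1 := l', x := k, x + 1 := l)))"]
      by (simp add: mult.left_commute)
    also have "\<dots> = hloc d a b h y (hloc d a b h x \<psi>) \<sigma>"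
      unfolding hloc_in[OF True]
      by (intro sum.cong refl)
         (simp add: hloc_in[OF upd_confs[OF assms(3,4) True]] sum_distrib_left, use assms(5) in auto)
    finally show ?thesis .
  qed
qed



lemma prj_quad:
  assumes "finite C" "subsp C S"
  shows "ip C x (prj C S x) = ip C (prj C S x) (prj C S x)"
proof -
  have "ip C (prj C S x) (vsub x (prj C S x)) = 0" using prjO[OF assms prjS[OF assms]] .
  then have "ip C (prj C S x) x = ip C (prj C S x) (prj C S x)" by (simp add: ip_sub2)
  then show ?thesis using prj_herm[OF assms] by metis
qed

lemma prj_zero: "finite C \<Longrightarrow> subsp C S \<Longrightarrow> prj C S zero_vec = zero_vec"
  using prj_idS subspD(2) by blast

context
  fixes d :: nat and h and a b :: int
  assumes pos: "positive_two_site d h" and a0: "a \<le> 0" and b1: "1 \<le> b"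
begin

abbreviation "CC \<equiv> confs d a b"
abbreviation "S1 \<equiv> kerH d a b h a 0"
abbreviation "S2 \<equiv> kerH d a b h 0 b"
abbreviation "S12 \<equiv> kerH d a b h a b"
abbreviation "TT \<equiv> kerH d a b h 1 b"
abbreviation "P1 \<equiv> prj CC S1"
abbreviation "P2 \<equiv> prj CC S2"
abbreviation "KK \<psi> \<equiv> P1 (P2 (P1 \<psi>))"
abbreviation "AA \<equiv> Hint d a b h 1 b"

lemma finCC: "finite CC" by simp
lemma b0: "0 \<le> b" using b1 by simp
lemmas kI = kerH_iff[where a=a and b=b, OF pos]
lemmas hI = Hint_herm[where a=a and b=b, OF pos]
lemmas sub1 = kerH_subsp[of d a b h a 0]
lemmas sub2 = kerH_subsp[of d a b h 0 b]
lemmas sub12 = kerH_subsp[of d a b h a b]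

lemma S12_eq: "S12 = S1 \<inter> S2"
proof -
  have "\<psi> \<in> S12 \<longleftrightarrow> \<psi> \<in> S1 \<and> \<psi> \<in> S2" for \<psi>
  proof -
    let ?P = "\<lambda>x. hloc d a b h x \<psi> = zero_vec"
    have q: "(\<forall>x. a \<le> x \<and> x < b \<longrightarrow> ?P x) \<longleftrightarrow>
      (\<forall>x. a \<le> x \<and> x < 0 \<longrightarrow> ?P x) \<and> (\<forall>x. 0 \<le> x \<and> x < b \<longrightarrow> ?P x)"
    proof (intro iffI conjI allI impI)
      fix x assume "\<forall>x. a \<le> x \<and> x < b \<longrightarrow> ?P x" "a \<le> x \<and> x < 0"
      then show "?P x" using b1 by auto
    next
      fix x assume "\<forall>x. a \<le> x \<and> x < b \<longrightarrow> ?P x" "0 \<le> x \<and> x < b"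
      then show "?P x" using a0 by auto
    next
      fix x assume "(\<forall>x. a \<le> x \<and> x < 0 \<longrightarrow> ?P x) \<and> (\<forall>x. 0 \<le> x \<and> x < b \<longrightarrow> ?P x)"
        "a \<le> x \<and> x < b"
      then show "?P x" by (cases "x < 0") auto
    qed
    have e1: "\<psi> \<in> S12 \<longleftrightarrow> \<psi> \<in> vecs d a b \<and> (\<forall>x. a \<le> x \<and> x < b \<longrightarrow> ?P x)"
      by (rule kI) auto
    have e2: "\<psi> \<in> S1 \<longleftrightarrow> \<psi> \<in> vecs d a b \<and> (\<forall>x. a \<le> x \<and> x < 0 \<longrightarrow> ?P x)"
      by (rule kI) (use a0 b1 in auto)
    have e3: "\<psi> \<in> S2 \<longleftrightarrow> \<psi> \<in> vecs d a b \<and> (\<forall>x. 0 \<le> x \<and> x < b \<longrightarrow> ?P x)"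
      by (rule kI) (use a0 b1 in auto)
    show ?thesis unfolding e1 e2 e3 q by blast
  qed
  then show ?thesis by blast
qed

lemma S2_TT: "S2 \<subseteq> TT"
proof
  fix \<psi> assume "\<psi> \<in> S2"
  then have "\<psi> \<in> vecs d a b \<and> (\<forall>x. 0 \<le> x \<and> x < b \<longrightarrow> hloc d a b h x \<psi> = zero_vec)"
    using kI[OF a0 order_refl] by blast
  then have "\<psi> \<in> vecs d a b \<and> (\<forall>x. 1 \<le> x \<and> x < b \<longrightarrow> hloc d a b h x \<psi> = zero_vec)"
    by auto
  then show "\<psi> \<in> TT" using kI[OF _ order_refl, of 1] a0 by auto
qed

lemma AA_S1: "\<phi> \<in> S1 \<Longrightarrow> AA \<phi> \<in> S1"
proof -
  assume \<phi>: "\<phi> \<in> S1"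
  then have hz: "hloc d a b h y \<phi> = zero_vec" if "a \<le> y" "y < 0" for y
    using kI[OF order_refl b0] that by blast
  have "hloc d a b h y (AA \<phi>) = zero_vec" if "a \<le> y" "y < 0" for y
  proof -
    have "hloc d a b h y (AA \<phi>) = (\<lambda>\<sigma>. \<Sum>x\<in>{1..<b}. hloc d a b h y (hloc d a b h x \<phi>) \<sigma>)"
      unfolding Hint_eq hloc_sum ..
    also have "\<dots> = (\<lambda>\<sigma>. \<Sum>x\<in>{1..<b}. hloc d a b h x (hloc d a b h y \<phi>) \<sigma>)"
      using that a0 by (intro ext sum.cong refl) (subst hloc_comm, auto)
    also have "\<dots> = zero_vec"
      unfolding hz[OF that] hloc_zero by (simp add: fun_eq_iff)
    finally show ?thesis .
  qed
  then show "AA \<phi> \<in> S1"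
    using kI[OF order_refl b0] Hint_VS vecs_VS by auto
qed

lemma P1_AA: "P1 (AA \<psi>) = AA (P1 \<psi>)"
proof (rule prj_eqI[OF finCC sub1])
  show "AA (P1 \<psi>) \<in> S1" using AA_S1 prjS[OF finCC sub1] by blast
  fix \<xi> assume \<xi>: "\<xi> \<in> S1"
  have "ip CC \<xi> (vsub (AA \<psi>) (AA (P1 \<psi>))) = ip CC \<xi> (AA (vsub \<psi> (P1 \<psi>)))"
    by (simp add: Hint_sub)
  also have "\<dots> = ip CC (AA \<xi>) (vsub \<psi> (P1 \<psi>))"
    using hI a0 by simp
  also have "\<dots> = 0" using prjO[OF finCC sub1 AA_S1[OF \<xi>]] .
  finally show "ip CC \<xi> (vsub (AA \<psi>) (AA (P1 \<psi>))) = 0" .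
qed

lemma P1_TT: "\<eta> \<in> TT \<Longrightarrow> P1 \<eta> \<in> TT"
proof -
  assume "\<eta> \<in> TT"
  then have "AA \<eta> = zero_vec" by (simp add: Defs.kerH_def)
  then have "AA (P1 \<eta>) = zero_vec" using P1_AA prj_zero[OF finCC sub1] by metis
  then show "P1 \<eta> \<in> TT" using prjV[OF finCC sub1] by (simp add: Defs.kerH_def vecs_VS)
qed

lemma KK_range: "KK \<psi> \<in> S1" "KK \<psi> \<in> TT"
  using prjS[OF finCC sub1] P1_TT S2_TT prjS[OF finCC sub2] by blast+

lemma KK_herm: "ip CC \<phi> (KK \<psi>) = ip CC (KK \<phi>) \<psi>"
  using prj_herm[OF finCC sub1] prj_herm[OF finCC sub2] by metis

lemma KK_sc: "KK (vsc c \<psi>) = vsc c (KK \<psi>)"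
  using prj_sc[OF finCC sub1] prj_sc[OF finCC sub2] by metis

lemma KK_quad: "ip CC \<psi> (KK \<psi>) = ip CC (P2 (P1 \<psi>)) (P2 (P1 \<psi>))"
  using prj_herm[OF finCC sub1] prj_quad[OF finCC sub2] by metis

lemma KK_V: "KK \<psi> \<in> VS CC" using prjV[OF finCC sub1] .

lemma fixed_eq: "{\<psi> \<in> vecs d a b. KK \<psi> = \<psi>} = S12"
proof (intro set_eqI iffI)
  fix \<psi> assume "\<psi> \<in> {\<psi> \<in> vecs d a b. KK \<psi> = \<psi>}"
  then have V: "\<psi> \<in> VS CC" and fx: "KK \<psi> = \<psi>" by (auto simp: vecs_VS)
  have in1: "\<psi> \<in> S1" using KK_range(1)[of \<psi>] fx by simp
  then have p1: "P1 \<psi> = \<psi>" using prj_idS[OF finCC sub1] by blast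
  have eq: "P1 (P2 \<psi>) = \<psi>" using fx p1 by simp
  have "Re (ip CC \<psi> \<psi>) \<le> Re (ip CC (P2 \<psi>) (P2 \<psi>))"
    using prj_norm_le[OF finCC sub1, of "P2 \<psi>"] eq by simp
  moreover have "Re (ip CC (P2 \<psi>) (P2 \<psi>)) \<le> Re (ip CC \<psi> \<psi>)"
    using prj_norm_le[OF finCC sub2] .
  ultimately have "P2 \<psi> = \<psi>" using prj_norm_eq[OF finCC sub2 V] by simp
  then have "\<psi> \<in> S2" using prjS[OF finCC sub2] by metis
  then show "\<psi> \<in> S12" using in1 S12_eq by blast
next
  fix \<psi> assume "\<psi> \<in> S12"
  then have "\<psi> \<in> S1" "\<psi> \<in> S2" "\<psi> \<in> vecs d a b" using S12_eq by (auto simp: Defs.kerH_def)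
  then show "\<psi> \<in> {\<psi> \<in> vecs d a b. KK \<psi> = \<psi>}"
    using prj_idS[OF finCC sub1] prj_idS[OF finCC sub2] by simp
qed

end



definition join :: "config \<Rightarrow> config \<Rightarrow> config" where
  "join \<beta> \<rho> = (\<lambda>x. if x \<le> 0 then \<beta> x else \<rho> x)"

context
  fixes d :: nat and h and a b :: int
  assumes pos: "positive_two_site d h" and a0: "a \<le> 0" and b1: "1 \<le> b"
begin

lemma join_confs: "\<beta> \<in> confs d a 0 \<Longrightarrow> \<rho> \<in> confs d 1 b \<Longrightarrow> join \<beta> \<rho> \<in> confs d a b"
  unfolding Defs.confs_def join_def using a0 b1 by auto

lemma restr_join: "\<beta> \<in> confs d a 0 \<Longrightarrow> \<rho> \<in> confs d 1 b \<Longrightarrow>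
   restr a 0 (join \<beta> \<rho>) = \<beta> \<and> restr 1 b (join \<beta> \<rho>) = \<rho>"
  unfolding Defs.confs_def join_def Defs.restr_def by (auto simp: fun_eq_iff)

lemma restr_confs: "\<sigma> \<in> confs d a b \<Longrightarrow>
   restr a 0 \<sigma> \<in> confs d a 0 \<and> restr 1 b \<sigma> \<in> confs d 1 b \<and> join (restr a 0 \<sigma>) (restr 1 b \<sigma>) = \<sigma>"
  unfolding Defs.confs_def join_def Defs.restr_def using a0 b1 by (auto simp: fun_eq_iff)

lemma join_upd_l: "x + 1 \<le> 0 \<Longrightarrow> (join \<beta> \<rho>)(x := k, x + 1 := l) = join (\<beta>(x := k, x + 1 := l)) \<rho>"
  unfolding join_def by (auto simp: fun_eq_iff)
lemma join_upd_r: "1 \<le> x \<Longrightarrow> (join \<beta> \<rho>)(x := k, x + 1 := l) = join \<beta> (\<rho>(x := k, x + 1 := l))"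
  unfolding join_def by (auto simp: fun_eq_iff)

definition lslice :: "(config \<Rightarrow> complex) \<Rightarrow> config \<Rightarrow> (config \<Rightarrow> complex)" where
  "lslice \<phi> \<rho> = (\<lambda>\<beta>. if \<beta> \<in> confs d a 0 then \<phi> (join \<beta> \<rho>) else 0)"
definition rslice :: "(config \<Rightarrow> complex) \<Rightarrow> config \<Rightarrow> (config \<Rightarrow> complex)" where
  "rslice \<phi> \<alpha> = (\<lambda>\<rho>. if \<rho> \<in> confs d 1 b then \<phi> (join \<alpha> \<rho>) else 0)"

lemma lslice_ker:
  assumes \<rho>: "\<rho> \<in> confs d 1 b" and \<phi>: "\<phi> \<in> kerH d a b h a 0"
  shows "lslice \<phi> \<rho> \<in> kerH d a 0 h a 0"
proof -
  have hz: "hloc d a b h x \<phi> = zero_vec" if "a \<le> x" "x < 0" for x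
    using kerH_iff[where a=a and b=b, OF pos order_refl, of 0] \<phi> b1 that by auto
  have "Hint d a 0 h a 0 (lslice \<phi> \<rho>) = zero_vec"
  proof
    fix \<beta>
    show "Hint d a 0 h a 0 (lslice \<phi> \<rho>) \<beta> = zero_vec \<beta>"
    proof (cases "\<beta> \<in> confs d a 0")
      case False then show ?thesis by (simp add: Hint_eq hloc_out)
    next
      case True
      have "hloc d a 0 h x (lslice \<phi> \<rho>) \<beta> = 0" if "a \<le> x" "x < 0" for x
      proof -
        have x1: "x + 1 \<le> 0" using that by simp
        have "hloc d a 0 h x (lslice \<phi> \<rho>) \<beta> = hloc d a b h x \<phi> (join \<beta> \<rho>)"
          unfolding hloc_in[OF True] hloc_in[OF join_confs[OF True \<rho>]]
          by (intro sum.cong refl)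
            (simp add: lslice_def upd_confs[OF that(1) x1 True] join_upd_l[OF x1],
             use x1 in \<open>simp add: join_def\<close>)
        also have "\<dots> = 0" using hz[OF that] by simp
        finally show ?thesis .
      qed
      then show ?thesis by (simp add: Hint_eq)
    qed
  qed
  moreover have "lslice \<phi> \<rho> \<in> vecs d a 0" by (simp add: Defs.vecs_def lslice_def)
  ultimately show ?thesis by (simp add: Defs.kerH_def)
qed

lemma rslice_ker:
  assumes \<alpha>: "\<alpha> \<in> confs d a 0" and \<phi>: "\<phi> \<in> kerH d a b h 1 b"
  shows "rslice \<phi> \<alpha> \<in> kerH d 1 b h 1 b"
proof -
  have hz: "hloc d a b h x \<phi> = zero_vec" if "1 \<le> x" "x < b" for x
    using kerH_iff[where a=a and b=b, OF pos _ order_refl, of 1] \<phi> a0 that by auto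
  have "Hint d 1 b h 1 b (rslice \<phi> \<alpha>) = zero_vec"
  proof
    fix \<rho>
    show "Hint d 1 b h 1 b (rslice \<phi> \<alpha>) \<rho> = zero_vec \<rho>"
    proof (cases "\<rho> \<in> confs d 1 b")
      case False then show ?thesis by (simp add: Hint_eq hloc_out)
    next
      case True
      have "hloc d 1 b h x (rslice \<phi> \<alpha>) \<rho> = 0" if "1 \<le> x" "x < b" for x
      proof -
        have x1: "x + 1 \<le> b" using that by simp
        have "hloc d 1 b h x (rslice \<phi> \<alpha>) \<rho> = hloc d a b h x \<phi> (join \<alpha> \<rho>)"
          unfolding hloc_in[OF True] hloc_in[OF join_confs[OF \<alpha> True]]
          by (intro sum.cong refl)
            (simp add: rslice_def upd_confs[OF that(1) x1 True] join_upd_r[OF that(1)],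
             use that in \<open>simp add: join_def\<close>)
        also have "\<dots> = 0" using hz[OF that] by simp
        finally show ?thesis .
      qed
      then show ?thesis by (simp add: Hint_eq)
    qed
  qed
  moreover have "rslice \<phi> \<alpha> \<in> vecs d 1 b" by (simp add: Defs.vecs_def rslice_def)
  ultimately show ?thesis by (simp add: Defs.kerH_def)
qed

abbreviation "P1' \<equiv> prj (confs d a 0) (kerH d a 0 h a 0)"

lemma decomp:
  assumes \<phi>1: "\<phi> \<in> kerH d a b h a 0" and \<phi>T: "\<phi> \<in> kerH d a b h 1 b"
  shows "\<phi> = (\<lambda>\<sigma>. \<Sum>\<alpha>\<in>confs d a 0. tens d a 0 b (P1' (ev \<alpha>)) (rslice \<phi> \<alpha>) \<sigma>)"
proof
  fix \<sigma>
  show "\<phi> \<sigma> = (\<Sum>\<alpha>\<in>confs d a 0. tens d a 0 b (P1' (ev \<alpha>)) (rslice \<phi> \<alpha>) \<sigma>)"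
  proof (cases "\<sigma> \<in> confs d a b")
    case False
    then show ?thesis using \<phi>1 by (simp add: Defs.tens_def Defs.kerH_def Defs.vecs_def)
  next
    case True
    define \<beta> where "\<beta> = restr a 0 \<sigma>"
    define \<rho> where "\<rho> = restr 1 b \<sigma>"
    have \<beta>: "\<beta> \<in> confs d a 0" and \<rho>: "\<rho> \<in> confs d 1 b" and \<sigma>: "join \<beta> \<rho> = \<sigma>"
      using restr_confs[OF True] unfolding \<beta>_def \<rho>_def by auto
    have L: "lslice \<phi> \<rho> \<in> kerH d a 0 h a 0" by (rule lslice_ker[OF \<rho> \<phi>1])
    have LV: "lslice \<phi> \<rho> \<in> VS (confs d a 0)" using L by (simp add: Defs.kerH_def vecs_VS)
    have "\<phi> \<sigma> = lslice \<phi> \<rho> \<beta>" using \<beta> \<sigma> by (simp add: lslice_def)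
    also have "\<dots> = P1' (lslice \<phi> \<rho>) \<beta>"
      using prj_idS[OF confs_finite kerH_subsp L] by simp
    also have "\<dots> = (\<Sum>\<alpha>\<in>confs d a 0. lslice \<phi> \<rho> \<alpha> * P1' (ev \<alpha>) \<beta>)"
      by (subst prj_expand[OF confs_finite kerH_subsp LV]) simp
    also have "\<dots> = (\<Sum>\<alpha>\<in>confs d a 0. tens d a 0 b (P1' (ev \<alpha>)) (rslice \<phi> \<alpha>) \<sigma>)"
    proof (intro sum.cong refl)
      fix \<alpha> assume \<alpha>: "\<alpha> \<in> confs d a 0"
      have "restr a 0 \<sigma> = \<beta>" "restr 1 b \<sigma> = \<rho>" using \<beta>_def \<rho>_def by auto
      then show "lslice \<phi> \<rho> \<alpha> * P1' (ev \<alpha>) \<beta> = tens d a 0 b (P1' (ev \<alpha>)) (rslice \<phi> \<alpha>) \<sigma>"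
        using True \<alpha> \<rho> by (simp add: Defs.tens_def lslice_def rslice_def)
    qed
    finally show ?thesis .
  qed
qed

lemma in_tensor:
  assumes \<phi>1: "\<phi> \<in> kerH d a b h a 0" and \<phi>T: "\<phi> \<in> kerH d a b h 1 b"
  shows "\<phi> \<in> tensor_sub d a 0 b (kerH d a 0 h a 0) (kerH d 1 b h 1 b)"
proof -
  obtain g where g: "bij_betw g {0..<card (confs d a 0)} (confs d a 0)"
    using ex_bij_betw_nat_finite[OF confs_finite] by blast
  let ?N = "card (confs d a 0)"
  have gin: "g i \<in> confs d a 0" if "i < ?N" for i using g that by (auto simp: bij_betw_def)
  have "\<phi> = (\<lambda>\<sigma>. \<Sum>\<alpha>\<in>confs d a 0. tens d a 0 b (P1' (ev \<alpha>)) (rslice \<phi> \<alpha>) \<sigma>)"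
    by (rule decomp[OF \<phi>1 \<phi>T])
  also have "\<dots> = (\<lambda>\<sigma>. \<Sum>i<?N. 1 * tens d a 0 b (P1' (ev (g i))) (rslice \<phi> (g i)) \<sigma>)"
    using sum.reindex_bij_betw[OF g, of "\<lambda>\<alpha>. tens d a 0 b (P1' (ev \<alpha>)) (rslice \<phi> \<alpha>) _"]
    by (simp add: atLeast0LessThan)
  finally have eq: "\<phi> = (\<lambda>\<sigma>. \<Sum>i<?N. 1 * tens d a 0 b (P1' (ev (g i))) (rslice \<phi> (g i)) \<sigma>)" .
  have mem: "\<forall>i<?N. P1' (ev (g i)) \<in> kerH d a 0 h a 0 \<and> rslice \<phi> (g i) \<in> kerH d 1 b h 1 b"
    using prjS[OF confs_finite kerH_subsp] rslice_ker[OF gin \<phi>T] by blast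
  show ?thesis unfolding Defs.tensor_sub_def
    apply (rule CollectI)
    apply (rule exI[where x="?N"], rule exI[where x="\<lambda>_. 1"], rule exI[where x="\<lambda>i. P1' (ev (g i))"],
        rule exI[where x="\<lambda>i. rslice \<phi> (g i)"])
    using conjI[OF mem eq] by simp
qed

end



lemma cont_coord[continuous_intros]: "continuous_on S (\<lambda>\<psi>::config \<Rightarrow> complex. \<psi> \<sigma>)"
  by (rule continuous_on_subset[OF continuous_on_product_coordinates]) simp

lemma compact_box:
  "compact {\<psi>::config \<Rightarrow> complex. \<forall>\<sigma>. (\<sigma> \<in> C \<longrightarrow> cmod (\<psi> \<sigma>) \<le> 1) \<and> (\<sigma> \<notin> C \<longrightarrow> \<psi> \<sigma> = 0)}"
proof -
  define S where "S = (\<lambda>\<sigma>. if \<sigma> \<in> C then cball (0::complex) 1 else {0})"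
  have eq: "{\<psi>::config \<Rightarrow> complex. \<forall>\<sigma>. (\<sigma> \<in> C \<longrightarrow> cmod (\<psi> \<sigma>) \<le> 1) \<and> (\<sigma> \<notin> C \<longrightarrow> \<psi> \<sigma> = 0)}
      = PiE UNIV S"
  proof (intro set_eqI)
    fix \<psi> :: "config \<Rightarrow> complex"
    have "\<psi> \<in> PiE UNIV S \<longleftrightarrow> (\<forall>\<sigma>. \<psi> \<sigma> \<in> S \<sigma>)" by (simp add: PiE_iff)
    also have "\<dots> \<longleftrightarrow> (\<forall>\<sigma>. (\<sigma> \<in> C \<longrightarrow> cmod (\<psi> \<sigma>) \<le> 1) \<and> (\<sigma> \<notin> C \<longrightarrow> \<psi> \<sigma> = 0))"
      unfolding S_def by (rule iff_allI) auto
    finally show "\<psi> \<in> {\<psi>::config \<Rightarrow> complex. \<forall>\<sigma>. (\<sigma> \<in> C \<longrightarrow> cmod (\<psi> \<sigma>) \<le> 1) \<and> (\<sigma> \<notin> C \<longrightarrow> \<psi> \<sigma> = 0)}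
      \<longleftrightarrow> \<psi> \<in> PiE UNIV S" by simp
  qed
  have cS: "compactin euclidean (S \<sigma>)" for \<sigma>
    unfolding S_def compactin_euclidean_iff by simp
  have "compactin (product_topology (\<lambda>_. euclidean) UNIV) (PiE UNIV S)"
    unfolding compactin_PiE using cS by blast
  then show ?thesis unfolding eq euclidean_product_topology compactin_euclidean_iff .
qed

lemma max_exists:
  fixes f :: "(config \<Rightarrow> complex) \<Rightarrow> real"
  assumes fin: "finite C" and XV: "X \<subseteq> VS C" and cl: "closed X" and ne: "X \<noteq> {}"
    and unit: "\<And>\<psi>. \<psi> \<in> X \<Longrightarrow> Re (ip C \<psi> \<psi>) = 1" and cont: "continuous_on X f"
  shows "\<exists>x\<in>X. \<forall>y\<in>X. f y \<le> f x"
proof -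
  let ?B = "{\<psi>::config \<Rightarrow> complex. \<forall>\<sigma>. (\<sigma> \<in> C \<longrightarrow> cmod (\<psi> \<sigma>) \<le> 1) \<and> (\<sigma> \<notin> C \<longrightarrow> \<psi> \<sigma> = 0)}"
  have sub: "X \<subseteq> ?B"
  proof
    fix \<psi> assume \<psi>: "\<psi> \<in> X"
    have "cmod (\<psi> \<sigma>) \<le> 1" if "\<sigma> \<in> C" for \<sigma>
    proof -
      have "(cmod (\<psi> \<sigma>))^2 \<le> (\<Sum>\<tau>\<in>C. (cmod (\<psi> \<tau>))^2)"
        by (rule member_le_sum[OF that _ fin]) simp
      also have "\<dots> = 1" using unit[OF \<psi>] ip_self_Re[of C \<psi>] by simp
      finally show ?thesis by (simp add: power_le_one_iff)
    qed
    then show "\<psi> \<in> ?B" using \<psi> XV by (auto simp: VS_def)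
  qed
  have "compact (?B \<inter> X)" using compact_box cl by blast
  moreover have "?B \<inter> X = X" using sub by blast
  ultimately have "compact X" by simp
  then show ?thesis using continuous_attains_sup[OF _ ne cont] by blast
qed

lemma cont_hloc[continuous_intros]: "continuous_on S (\<lambda>\<psi>. hloc d a b h x \<psi> \<sigma>)"
proof (cases "\<sigma> \<in> confs d a b")
  case True
  show ?thesis unfolding hloc_in[OF True] by (intro continuous_intros)
next
  case False
  show ?thesis unfolding hloc_out[OF False] by (intro continuous_intros)
qed

lemma cont_Hint[continuous_intros]: "continuous_on S (\<lambda>\<psi>. Hint d a b h c e \<psi> \<sigma>)"
  unfolding Hint_eq by (intro continuous_intros)

lemma cont_ip2[continuous_intros]: "continuous_on S (\<lambda>\<psi>. ip C \<xi> \<psi>)"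
  unfolding ip_def by (intro continuous_intros)

lemma cont_ipself[continuous_intros]: "continuous_on S (\<lambda>\<psi>. ip C \<psi> \<psi>)"
  unfolding ip_def by (intro continuous_intros)

lemma closed_kerH: "closed (kerH d a b h c e)"
proof -
  have "kerH d a b h c e = (\<Inter>\<sigma>\<in>-confs d a b. {\<psi>. \<psi> \<sigma> = 0}) \<inter> (\<Inter>\<sigma>. {\<psi>. Hint d a b h c e \<psi> \<sigma> = 0})"
    by (auto simp: Defs.kerH_def Defs.vecs_def fun_eq_iff)
  also have "closed \<dots>"
    by (intro closed_Int closed_INT ballI closed_Collect_eq continuous_intros)
  finally show ?thesis .
qed

lemma closed_perp: "closed {\<psi>. \<forall>\<xi>\<in>S. ip C \<xi> \<psi> = 0}"
proof -
  have "{\<psi>. \<forall>\<xi>\<in>S. ip C \<xi> \<psi> = 0} = (\<Inter>\<xi>\<in>S. {\<psi>. ip C \<xi> \<psi> = 0})" by auto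
  also have "closed \<dots>" by (intro closed_INT ballI closed_Collect_eq continuous_intros)
  finally show ?thesis .
qed

lemma closed_unit: "closed {\<psi>. ip C \<psi> \<psi> = 1}"
  by (intro closed_Collect_eq continuous_intros)

lemma cont_quad_prj:
  assumes "finite C" "subsp C S" "X \<subseteq> VS C"
  shows "continuous_on X (\<lambda>\<psi>. Re (ip C \<psi> (prj C S \<psi>)))"
proof -
  have "continuous_on X (\<lambda>\<psi>. Re (ip C \<psi> (\<lambda>\<tau>. \<Sum>\<sigma>\<in>C. \<psi> \<sigma> * prj C S (ev \<sigma>) \<tau>)))"
    unfolding ip_def by (intro continuous_intros)
  then show ?thesis
    by (rule continuous_on_cong[THEN iffD1, rotated 2])
       (use prj_expand[OF assms(1,2)] assms(3) in auto)
qed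



lemma prj_add:
  assumes "finite C" "subsp C S"
  shows "prj C S (vadd x y) = vadd (prj C S x) (prj C S y)"
proof (rule prj_eqI[OF assms])
  show "vadd (prj C S x) (prj C S y) \<in> S" using subspD(3)[OF assms(2) prjS[OF assms] prjS[OF assms]] .
  fix \<xi> assume \<xi>: "\<xi> \<in> S"
  have "vsub (vadd x y) (vadd (prj C S x) (prj C S y)) = vadd (vsub x (prj C S x)) (vsub y (prj C S y))"
    by (simp add: fun_eq_iff)
  then show "ip C \<xi> (vsub (vadd x y) (vadd (prj C S x) (prj C S y))) = 0"
    by (simp add: ip_add2 prjO[OF assms \<xi>])
qed

context
  fixes d :: nat and h and a b :: int
  assumes pos: "positive_two_site d h" and a0: "a \<le> 0" and b1: "1 \<le> b"
begin

abbreviation "CX \<equiv> confs d a b"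
abbreviation "U1 \<equiv> kerH d a b h a 0"
abbreviation "U2 \<equiv> kerH d a b h 0 b"
abbreviation "U12 \<equiv> kerH d a b h a b"
abbreviation "Q1 \<equiv> prj CX U1"
abbreviation "Q2 \<equiv> prj CX U2"
abbreviation "KX \<psi> \<equiv> Q1 (Q2 (Q1 \<psi>))"
abbreviation "RR \<equiv> {\<psi>. \<psi> \<in> U1 \<and> (\<forall>\<xi>\<in>U12. ip CX \<xi> \<psi> = 0)}"
abbreviation "XX \<equiv> {\<psi>. \<psi> \<in> U1 \<and> (\<forall>\<xi>\<in>U12. ip CX \<xi> \<psi> = 0) \<and> ip CX \<psi> \<psi> = 1}"
abbreviation "ff \<psi> \<equiv> Re (ip CX \<psi> (Q2 \<psi>))"

lemma finCCH: "finite CX" by simp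
lemmas sub1H = kerH_subsp[of d a b h a 0]
lemmas sub2H = kerH_subsp[of d a b h 0 b]
lemmas sub12H = kerH_subsp[of d a b h a b]
lemmas KKhH = KK_herm[OF pos a0 b1]
lemmas KKscH = KK_sc[OF pos a0 b1]
lemmas KKqH = KK_quad[OF pos a0 b1]
lemmas KKVH = KK_V[OF pos a0 b1]
lemmas KKrH = KK_range[OF pos a0 b1]
lemmas fixdH = fixed_eq[OF pos a0 b1]

lemma KK_add: "KX (vadd x y) = vadd (KX x) (KX y)"
  using prj_add[OF finCCH sub1H] prj_add[OF finCCH sub2H] by metis

lemma KK_fix: "\<xi> \<in> U12 \<Longrightarrow> KX \<xi> = \<xi>"
  using fixdH by blast

lemma KK_zero: "KX zero_vec = zero_vec"
  using prj_zero[OF finCCH sub1H] prj_zero[OF finCCH sub2H] by simp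

lemma RR_add: "x \<in> RR \<Longrightarrow> y \<in> RR \<Longrightarrow> vadd x y \<in> RR"
  using subspD(3)[OF sub1H] by (auto simp: ip_add2)
lemma RR_sc: "x \<in> RR \<Longrightarrow> vsc c x \<in> RR"
  using subspD(4)[OF sub1H] by (auto simp: ip_sc2)
lemma RR_sub: "x \<in> RR \<Longrightarrow> y \<in> RR \<Longrightarrow> vsub x y \<in> RR"
  using subsp_sub[OF sub1H] by (auto simp: ip_sub2)
lemma RR_V: "x \<in> RR \<Longrightarrow> x \<in> VS CX"
  using subspD(1)[OF sub1H] by auto

lemma S1_KK_P2: "\<psi> \<in> U1 \<Longrightarrow> ip CX \<psi> (KX \<psi>) = ip CX \<psi> (Q2 \<psi>)"
  using prj_idS[OF finCCH sub1H] prj_herm[OF finCCH sub1H] by metis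

lemma KK_quad_Im: "Im (ip CX \<psi> (KX \<psi>)) = 0"
  unfolding KKqH by (rule ip_self_Im)
lemma KK_quad_nonneg: "Re (ip CX \<psi> (KX \<psi>)) \<ge> 0"
  unfolding KKqH by (rule ip_self_nonneg)
lemma KK_quad_le: "Re (ip CX \<psi> (KX \<psi>)) \<le> Re (ip CX \<psi> \<psi>)"
  unfolding KKqH using prj_norm_le[OF finCCH sub2H, of "Q1 \<psi>"] prj_norm_le[OF finCCH sub1H, of \<psi>] by linarith

lemma ip_real: "ip C \<psi> \<psi> = complex_of_real (Re (ip C \<psi> \<psi>))"
  by (simp add: complex_eq_iff ip_self_Im)

lemma normalize:
  assumes \<psi>: "\<psi> \<in> RR" and r: "Re (ip CX \<psi> \<psi>) > 0"
  defines "\<psi>' \<equiv> vsc (complex_of_real (1 / sqrt (Re (ip CX \<psi> \<psi>)))) \<psi>"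
  shows "\<psi>' \<in> XX" "ff \<psi>' = Re (ip CX \<psi> (KX \<psi>)) / Re (ip CX \<psi> \<psi>)"
proof -
  define r where "r = Re (ip CX \<psi> \<psi>)"
  have r0: "r > 0" using r r_def by simp
  define c where "c = complex_of_real (1 / sqrt r)"
  have cc: "cnj c * c = complex_of_real (1 / r)"
  proof -
    have "1 / sqrt r * (1 / sqrt r) = 1 / r" using r0 by (simp add: real_sqrt_mult_self[of r])
    then have "complex_of_real (1 / sqrt r) * complex_of_real (1 / sqrt r) = complex_of_real (1 / r)"
      by (metis of_real_mult)
    then show ?thesis unfolding c_def by simp
  qed
  have \<psi>'R: "\<psi>' \<in> RR" unfolding \<psi>'_def using RR_sc[OF \<psi>] .
  have "ip CX \<psi>' \<psi>' = cnj c * c * ip CX \<psi> \<psi>"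
    unfolding \<psi>'_def c_def r_def by (simp add: ip_sc1 ip_sc2)
  also have "\<dots> = complex_of_real (1 / r) * complex_of_real r"
    unfolding cc r_def by (subst ip_real) simp
  also have "\<dots> = 1" using r0 by simp
  finally show "\<psi>' \<in> XX" using \<psi>'R by blast
  have "ff \<psi>' = Re (ip CX \<psi>' (KX \<psi>'))" using S1_KK_P2 \<psi>'R by simp
  also have "\<dots> = Re (cnj c * c * ip CX \<psi> (KX \<psi>))"
    unfolding \<psi>'_def c_def r_def KKscH by (simp add: ip_sc1 ip_sc2)
  also have "\<dots> = Re (ip CX \<psi> (KX \<psi>)) / r" unfolding cc by simp
  finally show "ff \<psi>' = Re (ip CX \<psi> (KX \<psi>)) / Re (ip CX \<psi> \<psi>)" unfolding r_def .
qed

lemma zero_of_norm: "\<psi> \<in> VS CX \<Longrightarrow> Re (ip CX \<psi> \<psi>) = 0 \<Longrightarrow> \<psi> = zero_vec"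
  using ip_self_zero_eq[OF finCCH] ip_real by (metis of_real_0)

context
  fixes \<psi>s assumes \<psi>s: "\<psi>s \<in> XX" and mx: "\<forall>\<psi>\<in>XX. ff \<psi> \<le> ff \<psi>s"
begin

lemma bound: "\<psi> \<in> RR \<Longrightarrow> Re (ip CX \<psi> (KX \<psi>)) \<le> ff \<psi>s * Re (ip CX \<psi> \<psi>)"
proof -
  assume \<psi>: "\<psi> \<in> RR"
  show ?thesis
  proof (cases "Re (ip CX \<psi> \<psi>) = 0")
    case True
    then have "\<psi> = zero_vec" using zero_of_norm RR_V[OF \<psi>] by blast
    then show ?thesis by (simp add: KK_zero)
  next
    case False
    then have r: "Re (ip CX \<psi> \<psi>) > 0" using ip_self_nonneg[of CX \<psi>] by linarith
    let ?\<psi>' = "vsc (complex_of_real (1 / sqrt (Re (ip CX \<psi> \<psi>)))) \<psi>"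
    have "ff ?\<psi>' \<le> ff \<psi>s" using mx normalize(1)[OF \<psi> r] by (rule bspec)
    then have "Re (ip CX \<psi> (KX \<psi>)) / Re (ip CX \<psi> \<psi>) \<le> ff \<psi>s"
      unfolding normalize(2)[OF \<psi> r] .
    then show ?thesis using r by (simp add: divide_le_eq mult.commute)
  qed
qed

lemma eigen: "KX \<psi>s = vsc (complex_of_real (ff \<psi>s)) \<psi>s"
proof -
  let ?l = "ff \<psi>s"
  define w where "w = vsub (KX \<psi>s) (vsc (complex_of_real ?l) \<psi>s)"
  have \<psi>sR: "\<psi>s \<in> RR" using \<psi>s by blast
  have one: "ip CX \<psi>s \<psi>s = 1" using \<psi>s by blast
  have KR: "KX \<psi>s \<in> RR"
  proof -
    have "ip CX \<xi> (KX \<psi>s) = 0" if "\<xi> \<in> U12" for \<xi>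
      using KKhH[of \<xi> \<psi>s] KK_fix[OF that] \<psi>s that by simp
    then show ?thesis using KKrH(1) by blast
  qed
  have wR: "w \<in> RR" unfolding w_def by (intro RR_sub KR RR_sc \<psi>sR)
  have qK: "ip CX \<psi>s (KX \<psi>s) = complex_of_real ?l"
    using S1_KK_P2[of \<psi>s] \<psi>s KK_quad_Im[of \<psi>s] by (simp add: complex_eq_iff)
  have w\<psi>: "ip CX \<psi>s w = 0" unfolding w_def by (simp add: ip_sub2 ip_sc2 one qK)
  have \<psi>w: "ip CX w \<psi>s = 0" using w\<psi> ip_cnj[of CX \<psi>s w] by simp
  have Kdec: "KX \<psi>s = vadd w (vsc (complex_of_real ?l) \<psi>s)" unfolding w_def by (simp add: fun_eq_iff)
  have wK: "ip CX w (KX \<psi>s) = ip CX w w"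
    by (subst Kdec) (simp add: ip_add2 ip_sc2 \<psi>w)
  have Kw: "ip CX \<psi>s (KX w) = ip CX w w"
    unfolding KKhH by (subst Kdec) (simp add: ip_add1 ip_sc1 w\<psi>)
  define W where "W = Re (ip CX w w)"
  define Q where "Q = ?l * W - Re (ip CX w (KX w))"
  have Q0: "Q \<ge> 0" unfolding Q_def W_def using bound[OF wR] by simp
  have "0 \<le> 2 * t * (- W) + t^2 * Q" for t :: real
  proof -
    let ?x = "vadd \<psi>s (vsc (complex_of_real t) w)"
    have xR: "?x \<in> RR" by (intro RR_add RR_sc \<psi>sR wR)
    have e1: "ip CX ?x (KX ?x) = ip CX \<psi>s (KX \<psi>s) + complex_of_real t * ip CX \<psi>s (KX w)
        + complex_of_real t * ip CX w (KX \<psi>s) + complex_of_real t * complex_of_real t * ip CX w (KX w)"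
      unfolding KK_add KKscH by (simp add: ip_add1 ip_add2 ip_sc1 ip_sc2 algebra_simps)
    have e2: "ip CX ?x ?x = ip CX \<psi>s \<psi>s + complex_of_real t * ip CX \<psi>s w
        + complex_of_real t * ip CX w \<psi>s + complex_of_real t * complex_of_real t * ip CX w w"
      by (simp add: ip_add1 ip_add2 ip_sc1 ip_sc2 algebra_simps)
    have "Re (ip CX ?x (KX ?x)) \<le> ?l * Re (ip CX ?x ?x)" using bound[OF xR] .
    then have "?l + 2 * t * W + t^2 * Re (ip CX w (KX w)) \<le> ?l * (1 + t^2 * W)"
      unfolding e1 e2 qK Kw wK w\<psi> \<psi>w one W_def by (simp add: power2_eq_square)
    then show ?thesis unfolding Q_def by (simp add: algebra_simps power2_eq_square)
  qed
  then have "- W = 0" using quad_zero[OF Q0] by blast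
  then have "w = zero_vec" using zero_of_norm RR_V[OF wR] W_def by simp
  then show ?thesis unfolding w_def by (simp add: fun_eq_iff)
qed

end

end



lemma bessel_point:
  assumes fin: "finite C" "finite G" and \<sigma>: "\<sigma> \<in> C"
    and on1: "\<And>i. i \<in> G \<Longrightarrow> ip C (u i) (u i) = 1"
    and on2: "\<And>i j. i \<in> G \<Longrightarrow> j \<in> G \<Longrightarrow> i \<noteq> j \<Longrightarrow> ip C (u i) (u j) = 0"
  shows "(\<Sum>i\<in>G. (cmod (u i \<sigma>))^2) \<le> 1"
proof -
  define c where "c i = cnj (u i \<sigma>)" for i
  have ce: "ip C (u i) (ev \<sigma>) = c i" for i
  proof -
    have "ip C (u i) (ev \<sigma>) = (\<Sum>\<tau>\<in>C. if \<tau> = \<sigma> then cnj (u i \<sigma>) else 0)"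
      unfolding ip_def by (intro sum.cong) (auto simp: ev_def)
    then show ?thesis using \<sigma> fin(1) by (simp add: c_def)
  qed
  have ec: "ip C (ev \<sigma>) (u i) = cnj (c i)" for i using ce[of i] ip_cnj[of C "u i" "ev \<sigma>"] by simp
  have ee: "ip C (ev \<sigma>) (ev \<sigma>) = 1"
  proof -
    have "ip C (ev \<sigma>) (ev \<sigma>) = (\<Sum>\<tau>\<in>C. if \<tau> = \<sigma> then 1 else 0)"
      unfolding ip_def by (intro sum.cong) (auto simp: ev_def)
    then show ?thesis using \<sigma> fin(1) by simp
  qed
  define s where "s = (\<lambda>\<tau>. \<Sum>i\<in>G. vsc (c i) (u i) \<tau>)"
  have es: "ip C (ev \<sigma>) s = (\<Sum>i\<in>G. c i * cnj (c i))" unfolding s_def ip_sum2 ip_sc2 ec ..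
  have sz: "ip C s z = (\<Sum>i\<in>G. cnj (c i) * ip C (u i) z)" for z unfolding s_def ip_sum1 ip_sc1 ..
  have us: "ip C (u i) s = c i" if i: "i \<in> G" for i
  proof -
    have "ip C (u i) s = (\<Sum>j\<in>G. c j * ip C (u i) (u j))" unfolding s_def ip_sum2 ip_sc2 ..
    also have "\<dots> = (\<Sum>j\<in>G. if j = i then c i else 0)"
      by (intro sum.cong refl) (use on1[OF i] on2[OF i] in auto)
    also have "\<dots> = c i" using i fin(2) by simp
    finally show ?thesis .
  qed
  have ss: "ip C s s = (\<Sum>i\<in>G. cnj (c i) * c i)" unfolding sz[of s] by (intro sum.cong refl) (simp add: us)
  have se: "ip C s (ev \<sigma>) = (\<Sum>i\<in>G. cnj (c i) * c i)" unfolding sz ce ..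
  have "ip C (vsub (ev \<sigma>) s) (vsub (ev \<sigma>) s) = 1 - (\<Sum>i\<in>G. cnj (c i) * c i)"
    unfolding ip_sub1 ip_sub2 ee es se ss by (simp add: mult.commute)
  then have "0 \<le> 1 - Re (\<Sum>i\<in>G. cnj (c i) * c i)"
    using ip_self_nonneg[of C "vsub (ev \<sigma>) s"] by simp
  moreover have "Re (\<Sum>i\<in>G. cnj (c i) * c i) = (\<Sum>i\<in>G. (cmod (u i \<sigma>))^2)"
    unfolding Re_sum c_def by (intro sum.cong refl) (simp add: complex_norm_square[symmetric] mult.commute)
  ultimately show ?thesis by simp
qed

lemma bessel_card:
  assumes fin: "finite C" "finite G"
    and on1: "\<And>i. i \<in> G \<Longrightarrow> ip C (u i) (u i) = 1"
    and on2: "\<And>i j. i \<in> G \<Longrightarrow> j \<in> G \<Longrightarrow> i \<noteq> j \<Longrightarrow> ip C (u i) (u j) = 0"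
  shows "card G \<le> card C"
proof -
  have "real (card G) = (\<Sum>i\<in>G. Re (ip C (u i) (u i)))" using on1 by simp
  also have "\<dots> = (\<Sum>i\<in>G. \<Sum>\<sigma>\<in>C. (cmod (u i \<sigma>))^2)" unfolding ip_self_Re ..
  also have "\<dots> = (\<Sum>\<sigma>\<in>C. \<Sum>i\<in>G. (cmod (u i \<sigma>))^2)" by (rule sum.swap)
  also have "\<dots> \<le> (\<Sum>\<sigma>\<in>C. 1)" by (intro sum_mono bessel_point[OF fin _ on1 on2]) auto
  also have "\<dots> = real (card C)" by simp
  finally show ?thesis by simp
qed

context
  fixes d :: nat and h and a b :: int
  assumes pos: "positive_two_site d h" and a0: "a \<le> 0" and b1: "1 \<le> b"
begin

abbreviation "CY \<equiv> confs d a b"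
abbreviation "V1 \<equiv> kerH d a b h a 0"
abbreviation "V2 \<equiv> kerH d a b h 0 b"
abbreviation "V12 \<equiv> kerH d a b h a b"
abbreviation "R1 \<equiv> prj CY V1"
abbreviation "R2 \<equiv> prj CY V2"
abbreviation "KY \<psi> \<equiv> R1 (R2 (R1 \<psi>))"
abbreviation "RY \<equiv> {\<psi>. \<psi> \<in> V1 \<and> (\<forall>\<xi>\<in>V12. ip CY \<xi> \<psi> = 0)}"
abbreviation "XY \<equiv> {\<psi>. \<psi> \<in> V1 \<and> (\<forall>\<xi>\<in>V12. ip CY \<xi> \<psi> = 0) \<and> ip CY \<psi> \<psi> = 1}"
abbreviation "fy \<psi> \<equiv> Re (ip CY \<psi> (R2 \<psi>))"
abbreviation "EE \<equiv> {\<mu>::real. \<mu> < 1 \<and> (\<exists>\<psi>\<in>vecs d a b. \<psi> \<noteq> zero_vec \<and>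
              KY \<psi> = (\<lambda>\<sigma>. complex_of_real \<mu> * \<psi> \<sigma>))}"

lemma finCY: "finite CY" by simp
lemmas sub1I = kerH_subsp[of d a b h a 0]
lemmas sub2I = kerH_subsp[of d a b h 0 b]
lemmas KKhI = KK_herm[OF pos a0 b1]
lemmas KKscI = KK_sc[OF pos a0 b1]
lemmas KKrI = KK_range[OF pos a0 b1]
lemmas fixdI = fixed_eq[OF pos a0 b1]
lemmas KKqnI = KK_quad_nonneg[OF pos a0 b1]
lemmas KKqII = KK_quad_Im[OF pos a0 b1]
lemmas KKqlI = KK_quad_le[OF pos a0 b1]
lemmas znI = zero_of_norm[OF pos a0 b1]
lemmas nrmI = normalize[OF pos a0 b1]
lemmas S1KPI = S1_KK_P2[OF pos a0 b1]

lemma eig_basic: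
  assumes V: "\<psi> \<in> VS CY" and nz: "\<psi> \<noteq> zero_vec" and K: "KY \<psi> = vsc (complex_of_real \<mu>) \<psi>"
  shows "\<mu> \<ge> 0" "\<mu> \<noteq> 1 \<Longrightarrow> \<forall>\<xi>\<in>V12. ip CY \<xi> \<psi> = 0" "\<mu> \<noteq> 0 \<Longrightarrow> \<psi> \<in> V1"
    "Re (ip CY \<psi> \<psi>) > 0"
proof -
  have r: "Re (ip CY \<psi> \<psi>) > 0"
    using znI[OF V] nz ip_self_nonneg[of CY \<psi>] by (metis less_eq_real_def)
  then show "Re (ip CY \<psi> \<psi>) > 0" .
  have "Re (ip CY \<psi> (KY \<psi>)) = \<mu> * Re (ip CY \<psi> \<psi>)" unfolding K by (simp add: ip_sc2)
  then show "\<mu> \<ge> 0" using KKqnI[of \<psi>] r by (simp add: zero_le_mult_iff)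
  show "\<forall>\<xi>\<in>V12. ip CY \<xi> \<psi> = 0" if "\<mu> \<noteq> 1"
  proof
    fix \<xi> assume \<xi>: "\<xi> \<in> V12"
    have "KY \<xi> = \<xi>" using fixdI \<xi> by blast
    have "complex_of_real \<mu> * ip CY \<xi> \<psi> = ip CY \<xi> (KY \<psi>)" unfolding K by (simp add: ip_sc2)
    also have "\<dots> = ip CY \<xi> \<psi>" unfolding KKhI \<open>KY \<xi> = \<xi>\<close> ..
    finally have "(complex_of_real \<mu> - 1) * ip CY \<xi> \<psi> = 0" by (simp add: algebra_simps)
    then show "ip CY \<xi> \<psi> = 0" using that by simp
  qed
  show "\<psi> \<in> V1" if "\<mu> \<noteq> 0"
  proof -
    have "\<psi> = vsc (complex_of_real (1/\<mu>)) (KY \<psi>)" unfolding K using that by (simp add: fun_eq_iff)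
    then show ?thesis using subspD(4)[OF sub1I KKrI(1)] by metis
  qed
qed

lemma eig_X:
  assumes V: "\<psi> \<in> VS CY" and nz: "\<psi> \<noteq> zero_vec" and K: "KY \<psi> = vsc (complex_of_real \<mu>) \<psi>"
    and m0: "\<mu> \<noteq> 0" and m1: "\<mu> \<noteq> 1"
  shows "\<exists>\<phi>. \<phi> \<in> XY \<and> fy \<phi> = \<mu> \<and> KY \<phi> = vsc (complex_of_real \<mu>) \<phi>"
proof -
  have R: "\<psi> \<in> RY" using eig_basic[OF V nz K] m0 m1 by blast
  have r: "Re (ip CY \<psi> \<psi>) > 0" using eig_basic(4)[OF V nz K] .
  let ?c = "complex_of_real (1 / sqrt (Re (ip CY \<psi> \<psi>)))"
  have "fy (vsc ?c \<psi>) = Re (ip CY \<psi> (KY \<psi>)) / Re (ip CY \<psi> \<psi>)" using nrmI(2)[OF R r] .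
  also have "\<dots> = \<mu>" unfolding K using r by (simp add: ip_sc2)
  finally have 1: "fy (vsc ?c \<psi>) = \<mu>" .
  have 2: "KY (vsc ?c \<psi>) = vsc (complex_of_real \<mu>) (vsc ?c \<psi>)"
    unfolding KKscI K by (simp add: fun_eq_iff)
  show ?thesis using nrmI(1)[OF R r] 1 2 by blast
qed

lemma E_finite: "finite EE"
proof -
  define E' where "E' = EE - {0}"
  have mem: "\<exists>\<phi>. \<phi> \<in> XY \<and> KY \<phi> = vsc (complex_of_real \<mu>) \<phi>" if "\<mu> \<in> E'" for \<mu>
  proof -
    from that obtain \<psi> where \<psi>: "\<psi> \<in> vecs d a b" "\<psi> \<noteq> zero_vec" "KY \<psi> = vsc (complex_of_real \<mu>) \<psi>"
      and m: "\<mu> < 1" "\<mu> \<noteq> 0" unfolding E'_def by (auto simp: vsc_def)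
    show ?thesis using eig_X[OF \<psi>(1)[unfolded vecs_VS] \<psi>(2,3) m(2)] m(1) by auto
  qed
  define u where "u \<mu> = (SOME \<phi>. \<phi> \<in> XY \<and> KY \<phi> = vsc (complex_of_real \<mu>) \<phi>)" for \<mu>
  have u: "u \<mu> \<in> XY \<and> KY (u \<mu>) = vsc (complex_of_real \<mu>) (u \<mu>)" if "\<mu> \<in> E'" for \<mu>
    unfolding u_def using someI_ex[OF mem[OF that]] .
  have on1: "ip CY (u \<mu>) (u \<mu>) = 1" if "\<mu> \<in> E'" for \<mu> using u[OF that] by blast
  have on2: "ip CY (u \<mu>) (u \<nu>) = 0" if "\<mu> \<in> E'" "\<nu> \<in> E'" "\<mu> \<noteq> \<nu>" for \<mu> \<nu>
  proof -
    have "complex_of_real \<nu> * ip CY (u \<mu>) (u \<nu>) = ip CY (u \<mu>) (KY (u \<nu>))"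
      using u[OF that(2)] by (simp add: ip_sc2)
    also have "\<dots> = ip CY (KY (u \<mu>)) (u \<nu>)" by (rule KKhI)
    also have "\<dots> = complex_of_real \<mu> * ip CY (u \<mu>) (u \<nu>)"
      using u[OF that(1)] by (simp add: ip_sc1)
    finally have "(complex_of_real \<nu> - complex_of_real \<mu>) * ip CY (u \<mu>) (u \<nu>) = 0"
      by (simp add: algebra_simps)
    then show ?thesis using that(3) by simp
  qed
  have "finite E' \<and> card E' \<le> card CY"
  proof (rule finite_if_finite_subsets_card_bdd)
    fix G assume "G \<subseteq> E'" "finite G"
    then show "card G \<le> card CY"
      using bessel_card[OF finCY \<open>finite G\<close>, of u] on1 on2 by blast
  qed
  moreover have "EE \<subseteq> insert 0 E'" unfolding E'_def by blast
  ultimately show ?thesis using finite_subset by blast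
qed

theorem part3:
  assumes ex: "EE \<noteq> {}"
  shows "Sup (insert 0 {fy \<psi> | \<psi>. \<psi> \<in> XY}) = Max EE"
proof (cases "XY = {}")
  case True
  have "EE \<subseteq> {0}"
  proof
    fix \<mu> assume "\<mu> \<in> EE"
    then obtain \<psi> where \<psi>: "\<psi> \<in> vecs d a b" "\<psi> \<noteq> zero_vec" "KY \<psi> = vsc (complex_of_real \<mu>) \<psi>"
      and m: "\<mu> < 1" by (auto simp: vsc_def)
    show "\<mu> \<in> {0}"
    proof (rule ccontr)
      assume "\<mu> \<notin> {0}"
      then show False using eig_X[OF \<psi>(1)[unfolded vecs_VS] \<psi>(2,3)] m True by auto
    qed
  qed
  then have e0: "EE = {0}" using ex by blast
  have e1: "{fy \<psi> | \<psi>. \<psi> \<in> XY} = {}" using True by blast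
  have "Sup (insert 0 {fy \<psi> | \<psi>. \<psi> \<in> XY}) = 0" unfolding e1 by simp
  moreover have "Max EE = 0" unfolding e0 by simp
  ultimately show ?thesis by (rule trans[OF _ sym])
next
  case False
  have XV: "XY \<subseteq> VS CY" using subspD(1)[OF sub1I] by blast
  have XYeq: "XY = V1 \<inter> {\<psi>. \<forall>\<xi>\<in>V12. ip CY \<xi> \<psi> = 0} \<inter> {\<psi>. ip CY \<psi> \<psi> = 1}" by blast
  have "closed (V1 \<inter> {\<psi>. \<forall>\<xi>\<in>V12. ip CY \<xi> \<psi> = 0} \<inter> {\<psi>. ip CY \<psi> \<psi> = 1})"
    by (intro closed_Int closed_kerH closed_perp closed_unit)
  then have cl: "closed XY" unfolding XYeq .
  have unit: "Re (ip CY \<psi> \<psi>) = 1" if "\<psi> \<in> XY" for \<psi> using that by simp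
  obtain \<psi>s where \<psi>s: "\<psi>s \<in> XY" and mx: "\<forall>\<psi>\<in>XY. fy \<psi> \<le> fy \<psi>s"
    using max_exists[OF finCY XV cl False unit cont_quad_prj[OF finCY sub2I XV]] by blast
  let ?l = "fy \<psi>s"
  have eig: "KY \<psi>s = vsc (complex_of_real ?l) \<psi>s" using eigen[OF pos a0 b1 \<psi>s mx] .
  have q: "Re (ip CY \<psi>s (KY \<psi>s)) = ?l" using S1KPI[of \<psi>s] \<psi>s by simp
  have l0: "?l \<ge> 0" using KKqnI[of \<psi>s] q by simp
  have l1: "?l \<le> 1" using KKqlI[of \<psi>s] q unit[OF \<psi>s] by simp
  have one: "ip CY \<psi>s \<psi>s = 1" using \<psi>s by blast
  have lne: "?l \<noteq> 1"
  proof
    assume "?l = 1"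
    then have "KY \<psi>s = \<psi>s" using eig by (simp add: fun_eq_iff)
    moreover have "\<psi>s \<in> vecs d a b" using XV \<psi>s by (auto simp: vecs_VS)
    ultimately have "\<psi>s \<in> V12" using fixdI by blast
    then have "ip CY \<psi>s \<psi>s = 0" using \<psi>s by blast
    then show False using one by simp
  qed
  have nz: "\<psi>s \<noteq> zero_vec" using one by auto
  have \<psi>sV: "\<psi>s \<in> vecs d a b" using XV \<psi>s by (auto simp: vecs_VS)
  have eig': "KY \<psi>s = (\<lambda>\<sigma>. complex_of_real ?l * \<psi>s \<sigma>)" using eig by (simp add: vsc_def)
  have lt: "?l < 1" using l1 lne by simp
  have lE: "?l \<in> EE"
    unfolding mem_Collect_eq using lt \<psi>sV nz eig' by blast
  have allE: "\<mu> \<le> ?l" if "\<mu> \<in> EE" for \<mu>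
  proof (cases "\<mu> = 0")
    case True then show ?thesis using l0 by simp
  next
    case F: False
    from that obtain \<psi> where \<psi>: "\<psi> \<in> vecs d a b" "\<psi> \<noteq> zero_vec" "KY \<psi> = vsc (complex_of_real \<mu>) \<psi>"
      and m: "\<mu> < 1" by (auto simp: vsc_def)
    obtain \<phi> where "\<phi> \<in> XY" "fy \<phi> = \<mu>"
      using eig_X[OF \<psi>(1)[unfolded vecs_VS] \<psi>(2,3) F] m by auto
    then show ?thesis using mx by auto
  qed
  have "Max EE = ?l" by (rule Max_eqI[OF E_finite allE lE])
  moreover have "Sup (insert 0 {fy \<psi> | \<psi>. \<psi> \<in> XY}) = ?l"
    by (rule cSup_eq_maximum) (use \<psi>s mx l0 in auto)
  ultimately show ?thesis by simp
qed

end



theorem lemma3p2: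
  fixes d :: nat and h :: "nat \<Rightarrow> nat \<Rightarrow> nat \<Rightarrow> nat \<Rightarrow> complex" and m n :: nat
  assumes "positive_two_site d h"
    and "frustration_free d h"
    and "m \<ge> 1" and "n \<ge> 1"
  shows "(\<forall>\<psi>\<in>vecs d (- int m) (int n).
            Kop d h m n \<psi> \<in> tensor_sub d (- int m) 0 (int n)
               (kerH d (- int m) 0 h (- int m) 0) (kerH d 1 (int n) h 1 (int n)))
       \<and> {\<psi> \<in> vecs d (- int m) (int n). Kop d h m n \<psi> = \<psi>}
            = kerH d (- int m) (int n) h (- int m) (int n)
       \<and> ((\<exists>\<mu>::real. \<mu> < 1 \<and> (\<exists>\<psi>\<in>vecs d (- int m) (int n). \<psi> \<noteq> zero_vec \<and>
              Kop d h m n \<psi> = (\<lambda>\<sigma>. complex_of_real \<mu> * \<psi> \<sigma>)))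
          \<longrightarrow> eps d h m n = Max {\<mu>::real. \<mu> < 1 \<and> (\<exists>\<psi>\<in>vecs d (- int m) (int n). \<psi> \<noteq> zero_vec \<and>
              Kop d h m n \<psi> = (\<lambda>\<sigma>. complex_of_real \<mu> * \<psi> \<sigma>))})"
proof -
  note pos = assms(1)
  have a0: "- int m \<le> 0" by simp
  have b1: "1 \<le> int n" using assms(4) by simp
  have K: "Kop d h m n = (\<lambda>\<psi>. prj (confs d (- int m) (int n)) (kerH d (- int m) (int n) h (- int m) 0)
      (prj (confs d (- int m) (int n)) (kerH d (- int m) (int n) h 0 (int n))
        (prj (confs d (- int m) (int n)) (kerH d (- int m) (int n) h (- int m) 0) \<psi>)))"
    by (simp add: Defs.Kop_def Let_def Gproj_prj fun_eq_iff)
  have p1: "\<forall>\<psi>\<in>vecs d (- int m) (int n).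
            Kop d h m n \<psi> \<in> tensor_sub d (- int m) 0 (int n)
               (kerH d (- int m) 0 h (- int m) 0) (kerH d 1 (int n) h 1 (int n))"
    unfolding K using in_tensor[OF pos a0 b1 KK_range(1)[OF pos a0 b1] KK_range(2)[OF pos a0 b1]] by blast
  have p2: "{\<psi> \<in> vecs d (- int m) (int n). Kop d h m n \<psi> = \<psi>}
            = kerH d (- int m) (int n) h (- int m) (int n)"
    unfolding K using fixed_eq[OF pos a0 b1] by simp
  have e: "eps d h m n = Sup (insert 0 {Re (ip (confs d (- int m) (int n)) \<psi>
      (prj (confs d (- int m) (int n)) (kerH d (- int m) (int n) h 0 (int n)) \<psi>)) | \<psi>.
      \<psi> \<in> kerH d (- int m) (int n) h (- int m) 0 \<and>
      (\<forall>\<xi>\<in>kerH d (- int m) (int n) h (- int m) (int n). ip (confs d (- int m) (int n)) \<xi> \<psi> = 0) \<and>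
      ip (confs d (- int m) (int n)) \<psi> \<psi> = 1})"
    by (simp add: Defs.eps_def Let_def inner_ip Gproj_prj)
  have p3: "(\<exists>\<mu>::real. \<mu> < 1 \<and> (\<exists>\<psi>\<in>vecs d (- int m) (int n). \<psi> \<noteq> zero_vec \<and>
              Kop d h m n \<psi> = (\<lambda>\<sigma>. complex_of_real \<mu> * \<psi> \<sigma>)))
          \<longrightarrow> eps d h m n = Max {\<mu>::real. \<mu> < 1 \<and> (\<exists>\<psi>\<in>vecs d (- int m) (int n). \<psi> \<noteq> zero_vec \<and>
              Kop d h m n \<psi> = (\<lambda>\<sigma>. complex_of_real \<mu> * \<psi> \<sigma>))}"
  proof
    assume ex: "\<exists>\<mu>::real. \<mu> < 1 \<and> (\<exists>\<psi>\<in>vecs d (- int m) (int n). \<psi> \<noteq> zero_vec \<and>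
              Kop d h m n \<psi> = (\<lambda>\<sigma>. complex_of_real \<mu> * \<psi> \<sigma>))"
    show "eps d h m n = Max {\<mu>::real. \<mu> < 1 \<and> (\<exists>\<psi>\<in>vecs d (- int m) (int n). \<psi> \<noteq> zero_vec \<and>
              Kop d h m n \<psi> = (\<lambda>\<sigma>. complex_of_real \<mu> * \<psi> \<sigma>))}"
    proof -
      have ne: "{\<mu>::real. \<mu> < 1 \<and> (\<exists>\<psi>\<in>vecs d (- int m) (int n). \<psi> \<noteq> zero_vec \<and>
              Kop d h m n \<psi> = (\<lambda>\<sigma>. complex_of_real \<mu> * \<psi> \<sigma>))} \<noteq> {}" using ex by blast
      show ?thesis using part3[OF pos a0 b1 ne[unfolded K], unfolded mem_Collect_eq] unfolding e K .
    qed
  qed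
  show ?thesis using p1 p2 p3 by blast
qed


end
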